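(* Let $\alpha,\beta$ satisfy $0<\alpha<\beta<1$ and $\beta>2\sqrt{3\alpha}$. Then $\mathsf{unitaryBQP}_\alpha\neq\mathsf{unitaryBQP}_\beta$.
   Context: A partial isometry is $U=\tilde U\Pi$ with $\Pi$ a projector and $\tilde U$ an isometry; a channel completion of $U$ is a channel $\Phi$ with $\Phi(\Pi\rho\Pi)=U\Pi\rho\Pi U^\dagger$ for all $\rho$. A unitary synthesis problem is a sequence $\mathscr U=(U_x)_{x\in\{0,1\}^*}$ of partial isometries. A circuit family $(C_x)_x$ implements $\mathscr U$ with worst-case error $\delta$ if for every $x$ there is a channel completion $\Phi_x$ of $U_x$ with $\|C_x-\Phi_x\|_\diamond\le\delta(|x|)$ (diamond norm). $\mathsf{unitaryBQP}_\delta$ is the set of unitary synthesis problems implementable with worst-case error $\delta$ by a uniform polynomial-time quantum algorithm, i.e. a family of polynomial-size general quantum circuits (gates $H,\mathit{CNOT},T$, ancilla introduction, tracing out, standard-basis measurement) whose descriptions are computed from $x$ by a classical polynomial-time Turing machine. *)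

theory Defs
  imports "Jordan_Normal_Form.Matrix" Complex_Main
begin

definition adj :: "complex mat \<Rightarrow> complex mat" where
  "adj A = mat (dim_col A) (dim_row A) (\<lambda>(i,j). cnj (A $$ (j,i)))"

definition mtrace :: "complex mat \<Rightarrow> complex" where
  "mtrace A = (\<Sum>i<dim_row A. A $$ (i,i))"

definition cvec_conj :: "complex vec \<Rightarrow> complex vec" where
  "cvec_conj v = vec (dim_vec v) (\<lambda>i. cnj (v $ i))"

definition isometry :: "nat \<Rightarrow> nat \<Rightarrow> complex mat \<Rightarrow> bool" where
  "isometry dout din V \<longleftrightarrow> V \<in> carrier_mat dout din \<and> adj V * V = 1\<^sub>m din"

definition projector :: "nat \<Rightarrow> complex mat \<Rightarrow> bool" where
  "projector d P \<longleftrightarrow> P \<in> carrier_mat d d \<and> adj P = P \<and> P * P = P"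

definition partial_isometry :: "nat \<Rightarrow> nat \<Rightarrow> complex mat \<Rightarrow> bool" where
  "partial_isometry dout din U \<longleftrightarrow>
     (\<exists>Ut P. isometry dout din Ut \<and> projector din P \<and> U = Ut * P)"

definition psd :: "nat \<Rightarrow> complex mat \<Rightarrow> bool" where
  "psd d P \<longleftrightarrow> P \<in> carrier_mat d d \<and>
     (\<forall>v \<in> carrier_vec d. Im (cvec_conj v \<bullet> (P *\<^sub>v v)) = 0 \<and> Re (cvec_conj v \<bullet> (P *\<^sub>v v)) \<ge> 0)"

definition density :: "nat \<Rightarrow> complex mat \<Rightarrow> bool" where
  "density d \<rho> \<longleftrightarrow> psd d \<rho> \<and> mtrace \<rho> = 1"

text \<open>Trace norm: tr |A| with |A| = sqrt(A^dagger A) the unique psd square root.\<close>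
definition trace_norm :: "complex mat \<Rightarrow> real" where
  "trace_norm A = Re (mtrace (THE P. psd (dim_col A) P \<and> P * P = adj A * A))"

text \<open>Block (i,j) with respect to the ancilla (ordering system (x) ancilla, index a*k+i).\<close>
definition block :: "nat \<Rightarrow> nat \<Rightarrow> nat \<Rightarrow> nat \<Rightarrow> complex mat \<Rightarrow> complex mat" where
  "block d k i j \<rho> = mat d d (\<lambda>(a,b). \<rho> $$ (a*k+i, b*k+j))"

text \<open>The map Phi (x) id_k applied to a (din*k)x(din*k) matrix.\<close>
definition ext :: "nat \<Rightarrow> nat \<Rightarrow> nat \<Rightarrow> (complex mat \<Rightarrow> complex mat) \<Rightarrow> complex mat \<Rightarrow> complex mat" where
  "ext din dout k \<Phi> \<rho> =
     mat (dout*k) (dout*k) (\<lambda>(r,s). \<Phi> (block din k (r mod k) (s mod k) \<rho>) $$ (r div k, s div k))"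

definition is_channel :: "nat \<Rightarrow> nat \<Rightarrow> (complex mat \<Rightarrow> complex mat) \<Rightarrow> bool" where
  "is_channel din dout \<Phi> \<longleftrightarrow>
     (\<forall>A \<in> carrier_mat din din. \<Phi> A \<in> carrier_mat dout dout) \<and>
     (\<forall>A \<in> carrier_mat din din. \<forall>B \<in> carrier_mat din din. \<Phi> (A + B) = \<Phi> A + \<Phi> B) \<and>
     (\<forall>A \<in> carrier_mat din din. \<forall>c. \<Phi> (c \<cdot>\<^sub>m A) = c \<cdot>\<^sub>m \<Phi> A) \<and>
     (\<forall>A \<in> carrier_mat din din. mtrace (\<Phi> A) = mtrace A) \<and>
     (\<forall>k \<rho>. k \<ge> 1 \<longrightarrow> psd (din*k) \<rho> \<longrightarrow> psd (dout*k) (ext din dout k \<Phi> \<rho>))"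

definition diamond_norm :: "nat \<Rightarrow> nat \<Rightarrow> (complex mat \<Rightarrow> complex mat) \<Rightarrow> real" where
  "diamond_norm din dout \<Theta> =
     Sup {trace_norm (ext din dout k \<Theta> X) | k X.
            k \<ge> 1 \<and> X \<in> carrier_mat (din*k) (din*k) \<and> trace_norm X \<le> 1}"

definition channel_completion ::
  "nat \<Rightarrow> nat \<Rightarrow> complex mat \<Rightarrow> (complex mat \<Rightarrow> complex mat) \<Rightarrow> bool" where
  "channel_completion din dout U \<Phi> \<longleftrightarrow> is_channel din dout \<Phi> \<and>
     (\<exists>Ut P. isometry dout din Ut \<and> projector din P \<and> U = Ut * P \<and>
        (\<forall>\<rho> \<in> carrier_mat din din. \<Phi> (P * \<rho> * P) = U * P * \<rho> * P * adj U))"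

text \<open>x maps to (n, m, U_x) with U_x a partial isometry from n qubits to m qubits.\<close>
type_synonym usp = "bool list \<Rightarrow> nat \<times> nat \<times> complex mat"

definition is_usp :: "usp \<Rightarrow> bool" where
  "is_usp P \<longleftrightarrow> (\<forall>x. case P x of (n, m, U) \<Rightarrow> partial_isometry (2^m) (2^n) U)"

datatype instr = Hg nat | Tg nat | CNOTg nat nat | Anc | TraceOut nat | Meas nat

definition bitn :: "nat \<Rightarrow> nat \<Rightarrow> nat" where
  "bitn k i = (k div 2^i) mod 2"

definition Hmat :: "complex mat" where
  "Hmat = mat 2 2 (\<lambda>(a,b). if a = 1 \<and> b = 1 then - complex_of_real (1 / sqrt 2)
                             else complex_of_real (1 / sqrt 2))"

definition Tmat :: "complex mat" where
  "Tmat = mat 2 2 (\<lambda>(a,b). if a \<noteq> b then 0 else if a = 0 then 1 else cis (pi / 4))"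

text \<open>Qubit i of a basis index k of a w-qubit register is bit i of k.\<close>
definition gate1 :: "nat \<Rightarrow> nat \<Rightarrow> complex mat \<Rightarrow> complex mat" where
  "gate1 w i G = mat (2^w) (2^w) (\<lambda>(k,l).
     if (\<forall>j. j \<noteq> i \<longrightarrow> bitn k j = bitn l j) then G $$ (bitn k i, bitn l i) else 0)"

definition cnot_map :: "nat \<Rightarrow> nat \<Rightarrow> nat \<Rightarrow> nat" where
  "cnot_map c t l = (if bitn l c = 1 then (if bitn l t = 1 then l - 2^t else l + 2^t) else l)"

definition cnot_mat :: "nat \<Rightarrow> nat \<Rightarrow> nat \<Rightarrow> complex mat" where
  "cnot_mat w c t = mat (2^w) (2^w) (\<lambda>(k,l). if k = cnot_map c t l then 1 else 0)"

text \<open>Ancilla introduction: new qubit (index w) initialised to 0.\<close>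
definition anc_mat :: "nat \<Rightarrow> complex mat" where
  "anc_mat w = mat (2^(w+1)) (2^w) (\<lambda>(k,l). if k = l then 1 else 0)"

definition ins_bit :: "nat \<Rightarrow> nat \<Rightarrow> nat \<Rightarrow> nat" where
  "ins_bit k i b = k mod 2^i + b * 2^i + (k div 2^i) * 2^(i+1)"

text \<open>Kraus operators for tracing out qubit i (remaining qubits keep their order).\<close>
definition trace_kraus :: "nat \<Rightarrow> nat \<Rightarrow> nat \<Rightarrow> complex mat" where
  "trace_kraus w i b = mat (2^(w-1)) (2^w) (\<lambda>(k,l). if l = ins_bit k i b then 1 else 0)"

definition meas_kraus :: "nat \<Rightarrow> nat \<Rightarrow> nat \<Rightarrow> complex mat" where
  "meas_kraus w i b = mat (2^w) (2^w) (\<lambda>(k,l). if k = l \<and> bitn k i = b then 1 else 0)"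

fun iwidth :: "nat \<Rightarrow> instr \<Rightarrow> nat" where
  "iwidth w Anc = w + 1"
| "iwidth w (TraceOut i) = w - 1"
| "iwidth w _ = w"

fun ivalid :: "nat \<Rightarrow> instr \<Rightarrow> bool" where
  "ivalid w (Hg i) = (i < w)"
| "ivalid w (Tg i) = (i < w)"
| "ivalid w (CNOTg c t) = (c < w \<and> t < w \<and> c \<noteq> t)"
| "ivalid w Anc = True"
| "ivalid w (TraceOut i) = (i < w)"
| "ivalid w (Meas i) = (i < w)"

fun kraus :: "nat \<Rightarrow> instr \<Rightarrow> complex mat list" where
  "kraus w (Hg i) = [gate1 w i Hmat]"
| "kraus w (Tg i) = [gate1 w i Tmat]"
| "kraus w (CNOTg c t) = [cnot_mat w c t]"
| "kraus w Anc = [anc_mat w]"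
| "kraus w (TraceOut i) = [trace_kraus w i 0, trace_kraus w i 1]"
| "kraus w (Meas i) = [meas_kraus w i 0, meas_kraus w i 1]"

definition kraus_apply :: "nat \<Rightarrow> complex mat list \<Rightarrow> complex mat \<Rightarrow> complex mat" where
  "kraus_apply dout Ks \<rho> = foldr (\<lambda>K acc. K * \<rho> * adj K + acc) Ks (0\<^sub>m dout dout)"

definition apply_instr :: "nat \<Rightarrow> instr \<Rightarrow> complex mat \<Rightarrow> complex mat" where
  "apply_instr w g \<rho> = kraus_apply (2^(iwidth w g)) (kraus w g) \<rho>"

fun cvalid :: "nat \<Rightarrow> instr list \<Rightarrow> bool" where
  "cvalid w [] = True"
| "cvalid w (g # gs) = (ivalid w g \<and> cvalid (iwidth w g) gs)"

fun cwidth :: "nat \<Rightarrow> instr list \<Rightarrow> nat" where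
  "cwidth w [] = w"
| "cwidth w (g # gs) = cwidth (iwidth w g) gs"

fun capply :: "nat \<Rightarrow> instr list \<Rightarrow> complex mat \<Rightarrow> complex mat" where
  "capply w [] \<rho> = \<rho>"
| "capply w (g # gs) \<rho> = capply (iwidth w g) gs (apply_instr w g \<rho>)"

definition enc_nat :: "nat \<Rightarrow> bool list" where
  "enc_nat k = concat (replicate k [True, True]) @ [False, False]"

fun enc_instr :: "instr \<Rightarrow> bool list" where
  "enc_instr (Hg i) = enc_nat 0 @ enc_nat i"
| "enc_instr (Tg i) = enc_nat 1 @ enc_nat i"
| "enc_instr (CNOTg c t) = enc_nat 2 @ enc_nat c @ enc_nat t"
| "enc_instr Anc = enc_nat 3"
| "enc_instr (TraceOut i) = enc_nat 4 @ enc_nat i"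
| "enc_instr (Meas i) = enc_nat 5 @ enc_nat i"

text \<open>A circuit description: number of input qubits and instruction list.\<close>
definition enc_circ :: "nat \<times> instr list \<Rightarrow> bool list" where
  "enc_circ c = enc_nat (fst c) @ concat (map enc_instr (snd c))"

datatype dir = Lft | Rgt | Stay

text \<open>(number of states, number of tape symbols, transition function).
  Start state 0, halting state 1; blank symbol 0, bit False = 1, bit True = 2.\<close>
type_synonym tm = "nat \<times> nat \<times> (nat \<Rightarrow> nat \<Rightarrow> nat \<times> nat \<times> dir)"

type_synonym config = "nat \<times> nat \<times> (nat \<Rightarrow> nat)"

definition wf_tm :: "tm \<Rightarrow> bool" where
  "wf_tm M = (case M of (Q, G, \<delta>) \<Rightarrow> Q \<ge> 2 \<and> G \<ge> 3 \<and>
     (\<forall>q < Q. \<forall>a < G. fst (\<delta> q a) < Q \<and> fst (snd (\<delta> q a)) < G))"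

definition tm_step :: "tm \<Rightarrow> config \<Rightarrow> config" where
  "tm_step M c = (case M of (Q, G, \<delta>) \<Rightarrow> case c of (q, h, tp) \<Rightarrow>
     if q = 1 then c else
       (case \<delta> q (tp h) of (q', a', d) \<Rightarrow>
          (q', (case d of Lft \<Rightarrow> h - 1 | Rgt \<Rightarrow> h + 1 | Stay \<Rightarrow> h), tp(h := a'))))"

definition tm_init :: "bool list \<Rightarrow> config" where
  "tm_init x = (0, 0, \<lambda>i. if i < length x then (if x ! i then 2 else 1) else 0)"

text \<open>Output: the bits written from cell 0 up to the first non-bit cell.\<close>
definition tm_output :: "(nat \<Rightarrow> nat) \<Rightarrow> bool list" where
  "tm_output tp = map (\<lambda>i. tp i = 2) [0..<(LEAST j. tp j \<noteq> 1 \<and> tp j \<noteq> 2)]"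

definition computes_in_time :: "tm \<Rightarrow> (bool list \<Rightarrow> bool list) \<Rightarrow> (nat \<Rightarrow> nat) \<Rightarrow> bool" where
  "computes_in_time M f T \<longleftrightarrow> (\<forall>x. \<exists>t \<le> T (length x).
      fst ((tm_step M ^^ t) (tm_init x)) = 1 \<and>
      tm_output (snd (snd ((tm_step M ^^ t) (tm_init x)))) = f x)"

definition poly_time_computable :: "(bool list \<Rightarrow> bool list) \<Rightarrow> bool" where
  "poly_time_computable f \<longleftrightarrow>
     (\<exists>M c k. wf_tm M \<and> computes_in_time M f (\<lambda>n. c * n ^ k + c))"

definition implements_with_error ::
  "(bool list \<Rightarrow> nat \<times> instr list) \<Rightarrow> usp \<Rightarrow> (nat \<Rightarrow> real) \<Rightarrow> bool" where
  "implements_with_error C P \<delta> \<longleftrightarrow> (\<forall>x. case P x of (n, m, U) \<Rightarrow>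
      fst (C x) = n \<and> cvalid n (snd (C x)) \<and> cwidth n (snd (C x)) = m \<and>
      (\<exists>\<Phi>. channel_completion (2^n) (2^m) U \<Phi> \<and>
         diamond_norm (2^n) (2^m) (\<lambda>\<rho>. capply n (snd (C x)) \<rho> - \<Phi> \<rho>) \<le> \<delta> (length x)))"

definition unitaryBQP :: "(nat \<Rightarrow> real) \<Rightarrow> usp set" where
  "unitaryBQP \<delta> = {P. is_usp P \<and>
     (\<exists>C. poly_time_computable (enc_circ \<circ> C) \<and> implements_with_error C P \<delta>)}"

end

theory Submission
  imports Defs "Jordan_Normal_Form.Spectral_Radius" "HOL-Library.Countable_Set"
begin


definition bf :: "nat \<Rightarrow> complex mat \<Rightarrow> (nat \<Rightarrow> complex) \<Rightarrow> (nat \<Rightarrow> complex) \<Rightarrow> complex" where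
  "bf n P u w = (\<Sum>k<n. \<Sum>l<n. cnj (u k) * P $$ (k,l) * w l)"

lemma mult_entry:
  assumes "A \<in> carrier_mat n m" "B \<in> carrier_mat m p" "i < n" "j < p"
  shows "(A * B) $$ (i,j) = (\<Sum>l<m. A $$ (i,l) * B $$ (l,j))"
  using assms by (auto simp: scalar_prod_def lessThan_atLeast0 intro!: sum.cong)

lemma row_col_sum:
  assumes "A \<in> carrier_mat n m" "B \<in> carrier_mat m p" "i < n" "j < p"
  shows "row A i \<bullet> col B j = (\<Sum>l<m. A $$ (i,l) * B $$ (l,j))"
  using mult_entry[OF assms] assms by simp

lemma mult_vec_entry:
  assumes "A \<in> carrier_mat n m" "v \<in> carrier_vec m" "i < n"
  shows "(A *\<^sub>v v) $ i = (\<Sum>l<m. A $$ (i,l) * v $ l)"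
  using assms by (auto simp: mult_mat_vec_def scalar_prod_def lessThan_atLeast0 intro!: sum.cong)

lemma qf_bf:
  assumes "P \<in> carrier_mat n n" "v \<in> carrier_vec n"
  shows "cvec_conj v \<bullet> (P *\<^sub>v v) = bf n P (\<lambda>k. v $ k) (\<lambda>k. v $ k)"
proof -
  have "cvec_conj v \<bullet> (P *\<^sub>v v) = (\<Sum>k<n. cnj (v $ k) * (P *\<^sub>v v) $ k)"
    using assms unfolding cvec_conj_def scalar_prod_def by (auto simp: lessThan_atLeast0)
  also have "\<dots> = bf n P (\<lambda>k. v $ k) (\<lambda>k. v $ k)"
    unfolding bf_def
  proof (intro sum.cong refl)
    fix k assume "k \<in> {..<n}"
    then show "cnj (v $ k) * (P *\<^sub>v v) $ k = (\<Sum>l<n. cnj (v $ k) * P $$ (k, l) * v $ l)"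
      by (subst mult_vec_entry[OF assms]) (auto simp: sum_distrib_left mult.assoc)
  qed
  finally show ?thesis .
qed

lemma psd_bf:
  assumes "psd n P"
  shows "Im (bf n P u u) = 0 \<and> Re (bf n P u u) \<ge> 0"
proof -
  have "bf n P u u = bf n P (\<lambda>k. vec n u $ k) (\<lambda>k. vec n u $ k)"
    unfolding bf_def by (auto intro!: sum.cong)
  also have "\<dots> = cvec_conj (vec n u) \<bullet> (P *\<^sub>v vec n u)"
    using assms by (subst qf_bf) (auto simp: psd_def)
  finally show ?thesis using assms unfolding psd_def by auto
qed

lemma double_delta:
  fixes n :: nat
  assumes "i < n" "j < n"
  shows "(\<Sum>k<n. \<Sum>l<n. (f k l :: complex) * ((if l = i then x else 0) * (if k = j then y else 0))) = f j i * x * y"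
proof -
  have "\<And>k l. f k l * ((if l = i then x else 0) * (if k = j then y else 0)) =
      (if k = j then (if l = i then f k l * x * y else 0) else 0)" by auto
  moreover have "\<And>k. (\<Sum>l<n. if k = j then (if l = i then f k l * x * y else 0) else 0)
      = (if k = j then f k i * x * y else 0)"
    using assms by (auto simp: sum.delta sum.delta')
  moreover have "(\<Sum>k<n. if k = j then f k i * x * y else 0) = f j i * x * y"
    using assms(2) by (subst sum.delta) auto
  ultimately show ?thesis by simp
qed

lemma bf_two:
  assumes "i < n" "j < n"
  shows "bf n P (\<lambda>k. (if k = i then a else 0) + (if k = j then b else 0))
                 (\<lambda>k. (if k = i then a else 0) + (if k = j then b else 0))
       = cnj a * a * P $$ (i,i) + cnj a * b * P $$ (i,j) + cnj b * a * P $$ (j,i) + cnj b * b * P $$ (j,j)"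
  using assms unfolding bf_def
  by (simp add: algebra_simps sum.distrib if_distrib[of cnj] double_delta cong: if_cong)

lemma adj_carrier[simp]: "A \<in> carrier_mat n m \<Longrightarrow> adj A \<in> carrier_mat m n"
  unfolding adj_def by auto

lemma adj_dims[simp]: "dim_row (adj A) = dim_col A" "dim_col (adj A) = dim_row A"
  unfolding adj_def by auto

lemma adj_index[simp]: "i < dim_col A \<Longrightarrow> j < dim_row A \<Longrightarrow> adj A $$ (i,j) = cnj (A $$ (j,i))"
  unfolding adj_def by auto

lemma psd_entries:
  assumes "psd n P" "i < n" "j < n"
  shows "P $$ (j,i) = cnj (P $$ (i,j))" "Im (P $$ (i,i)) = 0" "Re (P $$ (i,i)) \<ge> 0"
proof -
  have b: "Im (bf n P u u) = 0 \<and> Re (bf n P u u) \<ge> 0" for u using psd_bf[OF assms(1)] .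
  have ii: "Im (P $$ (i,i)) = 0 \<and> Re (P $$ (i,i)) \<ge> 0"
    using b[of "\<lambda>k. (if k = i then 1 else 0) + (if k = j then 0 else 0)"] bf_two[OF assms(2,3), of P 1 0] by simp
  have jj: "Im (P $$ (j,j)) = 0"
    using b[of "\<lambda>k. (if k = j then 1 else 0) + (if k = i then 0 else 0)"] bf_two[OF assms(3,2), of P 1 0] by simp
  have 1: "Im (P $$ (i,i) + P $$ (i,j) + P $$ (j,i) + P $$ (j,j)) = 0"
    using b[of "\<lambda>k. (if k = i then 1 else 0) + (if k = j then 1 else 0)"] bf_two[OF assms(2,3), of P 1 1] by simp
  have 2: "Im (P $$ (i,i) + \<i> * P $$ (i,j) - \<i> * P $$ (j,i) + P $$ (j,j)) = 0"
    using b[of "\<lambda>k. (if k = i then 1 else 0) + (if k = j then \<i> else 0)"] bf_two[OF assms(2,3), of P 1 \<i>]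
    by (simp add: algebra_simps)
  show "P $$ (j,i) = cnj (P $$ (i,j))"
    using 1 2 ii jj by (intro complex_eqI) (auto simp: algebra_simps)
  show "Im (P $$ (i,i)) = 0" "Re (P $$ (i,i)) \<ge> 0" using ii by auto
qed

lemma psd_herm:
  assumes "psd n P" shows "adj P = P"
proof -
  have P: "P \<in> carrier_mat n n" using assms psd_def by auto
  show ?thesis
  proof (rule eq_matI)
    fix i j assume "i < dim_row P" "j < dim_col P"
    then show "adj P $$ (i, j) = P $$ (i, j)"
      using P psd_entries(1)[OF assms, of j i] by simp
  qed (use P in auto)
qed

lemma bf_diff_expand:
  fixes t :: real and u z :: "nat \<Rightarrow> complex"
  shows "bf n P (\<lambda>k. u k - of_real t * z k) (\<lambda>k. u k - of_real t * z k) =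
    bf n P u u - of_real t * bf n P u z - of_real t * bf n P z u + of_real t * of_real t * bf n P z z"
  unfolding bf_def
  by (simp add: algebra_simps sum.distrib sum_subtractf sum_distrib_left)

lemma psd_null:
  assumes "psd n P" "bf n P u u = 0" "i < n"
  shows "(\<Sum>l<n. P $$ (i,l) * u l) = 0"
proof -
  define z where "z k = (\<Sum>l<n. P $$ (k,l) * u l)" for k
  define N where "N = (\<Sum>k<n. cmod (z k) ^ 2)"
  have herm: "\<And>k l. k < n \<Longrightarrow> l < n \<Longrightarrow> P $$ (l,k) = cnj (P $$ (k,l))"
    using psd_entries(1)[OF assms(1)] by blast
  have zu: "bf n P z u = of_real N"
  proof -
    have "bf n P z u = (\<Sum>k<n. cnj (z k) * z k)"
      unfolding bf_def z_def by (simp add: sum_distrib_left mult.assoc)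
    also have "\<dots> = of_real N" unfolding N_def
      by (simp only: of_real_sum complex_norm_square mult.commute)
    finally show ?thesis .
  qed
  have uz: "bf n P u z = of_real N"
  proof -
    have "bf n P u z = (\<Sum>k<n. \<Sum>l<n. \<Sum>m<n. cnj (u k) * P $$ (k,l) * (P $$ (l,m) * u m))"
      unfolding bf_def z_def by (simp add: sum_distrib_left)
    also have "\<dots> = (\<Sum>l<n. \<Sum>k<n. \<Sum>m<n. cnj (u k) * P $$ (k,l) * (P $$ (l,m) * u m))"
      by (rule sum.swap)
    also have "\<dots> = (\<Sum>l<n. cnj (z l) * z l)"
    proof (rule sum.cong[OF refl])
      fix l assume l: "l \<in> {..<n}"
      have "cnj (z l) = (\<Sum>k<n. cnj (u k) * P $$ (k,l))"
        unfolding z_def cnj_sum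
      proof (rule sum.cong[OF refl])
        fix k assume "k \<in> {..<n}"
        then have "cnj (P $$ (l,k)) = P $$ (k,l)" using l herm[of k l] by simp
        then show "cnj (P $$ (l, k) * u k) = cnj (u k) * P $$ (k, l)" by (simp add: mult.commute)
      qed
      then show "(\<Sum>k<n. \<Sum>m<n. cnj (u k) * P $$ (k,l) * (P $$ (l,m) * u m)) = cnj (z l) * z l"
        unfolding z_def[of l] by (simp add: sum_product)
    qed
    also have "\<dots> = of_real N" unfolding N_def
      by (simp only: of_real_sum complex_norm_square mult.commute)
    finally show ?thesis .
  qed
  obtain q where q: "bf n P z z = of_real q" "q \<ge> 0"
  proof -
    have "Im (bf n P z z) = 0" "Re (bf n P z z) \<ge> 0" using psd_bf[OF assms(1), of z] by auto
    then show ?thesis using that[of "Re (bf n P z z)"] by (simp add: complex_eq_iff)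
  qed
  have N0: "N \<ge> 0" unfolding N_def by (auto intro: sum_nonneg)
  define t where "t = N / (q + 1)"
  have t0: "t \<ge> 0" unfolding t_def using N0 q by auto
  have val: "bf n P (\<lambda>k. u k - t * z k) (\<lambda>k. u k - t * z k) = of_real (t * (t * q - 2 * N))"
    using bf_diff_expand[of n P u t z] unfolding assms(2) uz zu q by (simp add: algebra_simps)
  have "Re (bf n P (\<lambda>k. u k - t * z k) (\<lambda>k. u k - t * z k)) \<ge> 0"
    using psd_bf[OF assms(1)] by blast
  then have ge: "t * (t * q - 2 * N) \<ge> 0" using val by simp
  have "t * q \<le> N"
  proof -
    have "q / (q + 1) \<le> 1" using q by simp
    then have "N * (q / (q + 1)) \<le> N * 1" using N0 by (rule mult_left_mono)
    moreover have "t * q = N * (q / (q + 1))" unfolding t_def by simp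
    ultimately show ?thesis by simp
  qed
  then have "t * (t * q - 2 * N) \<le> - (t * N)"
  proof -
    have "t * (t * q) \<le> t * N" using \<open>t * q \<le> N\<close> t0 by (rule mult_left_mono)
    then show ?thesis by (simp add: algebra_simps)
  qed
  with ge have "t * N \<le> 0" by linarith
  then have "N * N \<le> 0" unfolding t_def using q N0 by (simp add: divide_simps)
  then have "N = 0" using N0 by (metis mult_eq_0_iff order_antisym_conv zero_le_square)
  then have "\<forall>k\<in>{..<n}. cmod (z k) ^ 2 = 0" unfolding N_def
    by (subst sum_nonneg_eq_0_iff[symmetric]) auto
  then show ?thesis using assms(3) unfolding z_def by auto
qed

lemma triple_cyc:
  fixes F :: "nat \<Rightarrow> nat \<Rightarrow> nat \<Rightarrow> complex"
  shows "(\<Sum>j<n. \<Sum>k<n. \<Sum>l<n. F k l j) = (\<Sum>j<n. \<Sum>k<n. \<Sum>l<n. F j k l)"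
proof -
  have "(\<Sum>j<n. \<Sum>k<n. \<Sum>l<n. F k l j) = (\<Sum>k<n. \<Sum>j<n. \<Sum>l<n. F k l j)"
    by (rule sum.swap)
  also have "\<dots> = (\<Sum>k<n. \<Sum>l<n. \<Sum>j<n. F k l j)"
    by (rule sum.cong[OF refl], rule sum.swap)
  finally show ?thesis .
qed

lemma psd_root_unique:
  assumes P: "psd n P" and Q: "psd n Q" and PQ: "P * P = Q * Q"
  shows "P = Q"
proof -
  have Pc: "P \<in> carrier_mat n n" and Qc: "Q \<in> carrier_mat n n" using P Q psd_def by auto
  define a where "a k l = P $$ (k,l) - Q $$ (k,l)" for k l
  have ha: "a l k = cnj (a k l)" if "k < n" "l < n" for k l
    unfolding a_def using psd_entries(1)[OF P that] psd_entries(1)[OF Q that] by simp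
  have E: "(\<Sum>l<n. P $$ (k,l) * a l j) = - (\<Sum>l<n. a k l * Q $$ (l,j))" if "k < n" "j < n" for k j
  proof -
    have "(P * P) $$ (k,j) = (Q * Q) $$ (k,j)" using PQ by simp
    then have "(\<Sum>l<n. P $$ (k,l) * P $$ (l,j)) = (\<Sum>l<n. Q $$ (k,l) * Q $$ (l,j))"
      using mult_entry[OF Pc Pc that] mult_entry[OF Qc Qc that] by simp
    then show ?thesis unfolding a_def
      by (simp add: algebra_simps sum_subtractf sum.distrib eq_neg_iff_add_eq_0)
  qed
  define c where "c j = (\<lambda>k. a k j)" for j
  have ca: "cnj (a k j) = a j k" if "k < n" "j < n" for k j
    using ha[OF that(2,1)] by simp
  have bfP: "bf n P (c j) (c j) = (\<Sum>k<n. a j k * (\<Sum>l<n. P $$ (k,l) * a l j))" if "j < n" for j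
    unfolding bf_def c_def
    by (rule sum.cong[OF refl]) (use ca that in \<open>auto simp: sum_distrib_left mult.assoc\<close>)
  have bfQ: "bf n Q (c j) (c j) = (\<Sum>k<n. \<Sum>l<n. a j k * Q $$ (k,l) * a l j)" if "j < n" for j
    unfolding bf_def c_def
    by (rule sum.cong[OF refl]) (use ca that in \<open>auto simp: sum_distrib_left mult.assoc\<close>)
  have "(\<Sum>j<n. bf n P (c j) (c j)) = - (\<Sum>j<n. \<Sum>k<n. \<Sum>l<n. a j k * a k l * Q $$ (l,j))"
    using bfP E by (simp add: sum_distrib_left mult.assoc sum_negf)
  also have "(\<Sum>j<n. \<Sum>k<n. \<Sum>l<n. a j k * a k l * Q $$ (l,j)) =
             (\<Sum>j<n. \<Sum>k<n. \<Sum>l<n. a j k * Q $$ (k,l) * a l j)"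
    using triple_cyc[of "\<lambda>k l j. a j k * a k l * Q $$ (l,j)" n] by (simp add: mult_ac)
  also have "\<dots> = (\<Sum>j<n. bf n Q (c j) (c j))" using bfQ by simp
  finally have sum0: "(\<Sum>j<n. bf n P (c j) (c j)) + (\<Sum>j<n. bf n Q (c j) (c j)) = 0" by simp
  have nnP: "Re (bf n P (c j) (c j)) \<ge> 0" "Im (bf n P (c j) (c j)) = 0" for j using psd_bf[OF P] by auto
  have nnQ: "Re (bf n Q (c j) (c j)) \<ge> 0" "Im (bf n Q (c j) (c j)) = 0" for j using psd_bf[OF Q] by auto
  have "(\<Sum>j<n. Re (bf n P (c j) (c j)) + Re (bf n Q (c j) (c j))) = 0"
    using arg_cong[OF sum0, of Re] by (simp add: sum.distrib)
  then have "\<forall>j\<in>{..<n}. Re (bf n P (c j) (c j)) + Re (bf n Q (c j) (c j)) = 0"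
    by (subst sum_nonneg_eq_0_iff[symmetric]) (auto intro: add_nonneg_nonneg nnP nnQ)
  then have z: "bf n P (c j) (c j) = 0 \<and> bf n Q (c j) (c j) = 0" if "j < n" for j
  proof -
    have "Re (bf n P (c j) (c j)) + Re (bf n Q (c j) (c j)) = 0" using that \<open>\<forall>j\<in>{..<n}. _\<close> by auto
    then have "Re (bf n P (c j) (c j)) = 0" "Re (bf n Q (c j) (c j)) = 0" using nnP[of j] nnQ[of j] by linarith+
    then show ?thesis using nnP[of j] nnQ[of j] by (auto simp: complex_eq_iff)
  qed
  have PA: "(\<Sum>l<n. P $$ (k,l) * a l j) = 0" if "k < n" "j < n" for k j
    using psd_null[OF P, of "c j" k] z[OF that(2)] that unfolding c_def by auto
  have QA: "(\<Sum>l<n. Q $$ (k,l) * a l j) = 0" if "k < n" "j < n" for k j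
    using psd_null[OF Q, of "c j" k] z[OF that(2)] that unfolding c_def by auto
  have AA: "(\<Sum>l<n. a k l * a l j) = 0" if "k < n" "j < n" for k j
  proof -
    have "(\<Sum>l<n. a k l * a l j) = (\<Sum>l<n. P $$ (k,l) * a l j) - (\<Sum>l<n. Q $$ (k,l) * a l j)"
      unfolding a_def[of k] by (simp add: algebra_simps sum_subtractf)
    then show ?thesis using PA[OF that] QA[OF that] by simp
  qed
  have a0: "a l j = 0" if "l < n" "j < n" for l j
  proof -
    have "(\<Sum>l<n. a j l * a l j) = (\<Sum>l<n. of_real (cmod (a l j) ^ 2))"
    proof (rule sum.cong[OF refl])
      fix l assume "l \<in> {..<n}"
      then show "a j l * a l j = of_real (cmod (a l j) ^ 2)"
        using ha[of l j] that complex_norm_square[of "a l j"] by (simp add: mult.commute)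
    qed
    then have "(\<Sum>l<n. cmod (a l j) ^ 2) = 0" using AA[OF that(2) that(2)]
      by (metis of_real_eq_0_iff of_real_sum)
    then have "\<forall>l\<in>{..<n}. cmod (a l j) ^ 2 = 0"
      by (subst sum_nonneg_eq_0_iff[symmetric]) auto
    then show ?thesis using that by auto
  qed
  show ?thesis
    by (rule eq_matI) (use Pc Qc a0 in \<open>auto simp: a_def\<close>)
qed

lemma psd_iff_bf:
  "psd n P \<longleftrightarrow> P \<in> carrier_mat n n \<and> (\<forall>u. Im (bf n P u u) = 0 \<and> Re (bf n P u u) \<ge> 0)"
proof
  assume "psd n P" then show "P \<in> carrier_mat n n \<and> (\<forall>u. Im (bf n P u u) = 0 \<and> Re (bf n P u u) \<ge> 0)"
    using psd_bf psd_def by blast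
next
  assume a: "P \<in> carrier_mat n n \<and> (\<forall>u. Im (bf n P u u) = 0 \<and> Re (bf n P u u) \<ge> 0)"
  show "psd n P" unfolding psd_def
  proof (intro conjI ballI)
    fix v :: "complex vec" assume v: "v \<in> carrier_vec n"
    show "Im (cvec_conj v \<bullet> (P *\<^sub>v v)) = 0" "Re (cvec_conj v \<bullet> (P *\<^sub>v v)) \<ge> 0"
      using a qf_bf[OF _ v, of P] by auto
  qed (use a in auto)
qed

lemma bf_mult_right:
  assumes "X \<in> carrier_mat n n" "Y \<in> carrier_mat n n"
  shows "bf n (X * Y) u v = bf n X u (\<lambda>k. \<Sum>l<n. Y $$ (k,l) * v l)"
proof -
  have "bf n (X * Y) u v = (\<Sum>k<n. \<Sum>l<n. \<Sum>m<n. cnj (u k) * X $$ (k,m) * Y $$ (m,l) * v l)"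
    unfolding bf_def using assms
    by (intro sum.cong refl) (simp add: row_col_sum[OF assms] sum_distrib_left sum_distrib_right mult.assoc)
  also have "\<dots> = (\<Sum>k<n. \<Sum>m<n. \<Sum>l<n. cnj (u k) * X $$ (k,m) * Y $$ (m,l) * v l)"
    by (intro sum.cong refl sum.swap)
  also have "\<dots> = bf n X u (\<lambda>k. \<Sum>l<n. Y $$ (k,l) * v l)"
    unfolding bf_def by (simp add: sum_distrib_left mult.assoc)
  finally show ?thesis .
qed

lemma bf_mult_left:
  assumes "X \<in> carrier_mat n n" "Y \<in> carrier_mat n n" "adj X = X"
  shows "bf n (X * Y) u v = bf n Y (\<lambda>k. \<Sum>l<n. X $$ (k,l) * u l) v"
proof -
  have h: "cnj (X $$ (m,k)) = X $$ (k,m)" if "k < n" "m < n" for k m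
  proof -
    have "adj X $$ (k,m) = X $$ (k,m)" using assms(3) by simp
    then show ?thesis using that assms(1) by simp
  qed
  have "bf n (X * Y) u v = (\<Sum>k<n. \<Sum>l<n. \<Sum>m<n. cnj (u k) * X $$ (k,m) * Y $$ (m,l) * v l)"
    unfolding bf_def using assms
    by (intro sum.cong refl) (simp add: row_col_sum[OF assms(1,2)] sum_distrib_left sum_distrib_right mult.assoc)
  also have "\<dots> = (\<Sum>l<n. \<Sum>k<n. \<Sum>m<n. cnj (u k) * X $$ (k,m) * Y $$ (m,l) * v l)"
    by (rule sum.swap)
  also have "\<dots> = (\<Sum>l<n. \<Sum>m<n. \<Sum>k<n. cnj (u k) * X $$ (k,m) * Y $$ (m,l) * v l)"
    by (intro sum.cong refl sum.swap)
  also have "\<dots> = (\<Sum>m<n. \<Sum>l<n. \<Sum>k<n. cnj (u k) * X $$ (k,m) * Y $$ (m,l) * v l)"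
    by (rule sum.swap)
  also have "\<dots> = bf n Y (\<lambda>k. \<Sum>l<n. X $$ (k,l) * u l) v"
    unfolding bf_def cnj_sum
  proof (intro sum.cong refl)
    fix m l assume m: "m \<in> {..<n}" and l: "l \<in> {..<n}"
    have "(\<Sum>k<n. cnj (u k) * X $$ (k,m) * Y $$ (m,l) * v l) =
          (\<Sum>k<n. cnj (X $$ (m, k) * u k)) * Y $$ (m, l) * v l"
      by (simp add: sum_distrib_right) (rule sum.cong, use h m in auto)
    then show "(\<Sum>k<n. cnj (u k) * X $$ (k,m) * Y $$ (m,l) * v l) =
          (\<Sum>k<n. cnj (X $$ (m, k) * u k)) * Y $$ (m, l) * v l" .
  qed
  finally show ?thesis .
qed

lemma bf_conj_herm:
  assumes "H \<in> carrier_mat n n" "B \<in> carrier_mat n n" "adj H = H"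
  shows "bf n (H * B * H) u u = bf n B (\<lambda>k. \<Sum>l<n. H $$ (k,l) * u l) (\<lambda>k. \<Sum>l<n. H $$ (k,l) * u l)"
proof -
  have "H * B * H = H * (B * H)" using assms by simp
  then have "bf n (H * B * H) u u = bf n (B * H) (\<lambda>k. \<Sum>l<n. H $$ (k,l) * u l) u"
    using bf_mult_left[OF assms(1) _ assms(3), of "B * H"] assms by simp
  also have "\<dots> = bf n B (\<lambda>k. \<Sum>l<n. H $$ (k,l) * u l) (\<lambda>k. \<Sum>l<n. H $$ (k,l) * u l)"
    using bf_mult_right[OF assms(2,1)] by simp
  finally show ?thesis .
qed

lemma rank1_sq_sum:
  fixes x y :: "nat \<Rightarrow> complex" and n :: nat
  assumes "i < n" "j < n"
  shows "(\<Sum>k<n. ((if i = k then 1 else 0) - x i * y k) * ((if k = j then 1 else 0) - x k * y j))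
       = (if i = j then 1 else 0) - 2 * x i * y j + x i * y j * (\<Sum>k<n. y k * x k)"
proof -
  have pt: "((if i = k then 1 else 0) - x i * y k) * ((if k = j then 1 else 0) - x k * y j) =
     (if k = i then (if i = j then 1 else 0) else 0) - (if k = i then x k * y j else 0)
       - (if k = j then x i * y k else 0) + x i * y j * (y k * x k)" for k
    by (auto simp: algebra_simps)
  have "(\<Sum>k<n. ((if i = k then 1 else 0) - x i * y k) * ((if k = j then 1 else 0) - x k * y j))
     = (\<Sum>k<n. (if k = i then (if i = j then 1 else 0) else 0)) - (\<Sum>k<n. (if k = i then x k * y j else 0))
       - (\<Sum>k<n. (if k = j then x i * y k else 0)) + (\<Sum>k<n. x i * y j * (y k * x k))"
    unfolding pt by (simp add: sum.distrib sum_subtractf)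
  also have "\<dots> = (if i = j then 1 else 0) - x i * y j - x i * y j + x i * y j * (\<Sum>k<n. y k * x k)"
    using assms by (simp add: sum_distrib_left)
  finally show ?thesis by simp
qed

lemma householder:
  fixes u :: "nat \<Rightarrow> complex"
  assumes n: "0 < n" and u0: "Im (u 0) = 0" "Re (u 0) \<ge> 0" and nrm: "(\<Sum>i<n. cmod (u i)^2) = 1"
  shows "\<exists>H. H \<in> carrier_mat n n \<and> adj H = H \<and> H * H = 1\<^sub>m n \<and> (\<forall>i<n. H $$ (i,0) = u i)"
proof -
  define a where "a = Re (u 0)"
  have ua: "u 0 = of_real a" using u0 unfolding a_def by (simp add: complex_eq_iff)
  have split: "(\<Sum>i<n. cmod (u i)^2) = cmod (u 0)^2 + (\<Sum>i\<in>{1..<n}. cmod (u i)^2)"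
  proof -
    have "{..<n} = insert 0 {1..<n}" using n by auto
    then show ?thesis by simp
  qed
  have rest0: "(\<Sum>i\<in>{1..<n}. cmod (u i)^2) \<ge> 0" by (auto intro: sum_nonneg)
  have a2: "a * a + (\<Sum>i\<in>{1..<n}. cmod (u i)^2) = 1" using nrm split ua by (simp add: power2_eq_square)
  have a1: "a \<le> 1"
  proof (rule ccontr)
    assume "\<not> a \<le> 1" then have "a * a > 1" by (metis less_1_mult not_le)
    then show False using a2 rest0 by linarith
  qed
  show ?thesis
  proof (cases "a = 1")
    case True
    then have "(\<Sum>i\<in>{1..<n}. cmod (u i)^2) = 0" using a2 by simp
    then have z: "\<forall>i\<in>{1..<n}. cmod (u i)^2 = 0" by (subst sum_nonneg_eq_0_iff[symmetric]) auto
    show ?thesis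
    proof (intro exI[of _ "1\<^sub>m n"] conjI allI impI)
      show "adj (1\<^sub>m n) = 1\<^sub>m n" by (rule eq_matI) auto
      fix i assume i: "i < n"
      show "1\<^sub>m n $$ (i, 0) = u i"
      proof (cases "i = 0")
        case True then show ?thesis using i ua \<open>a = 1\<close> by simp
      next
        case False then show ?thesis using i z by auto
      qed
    qed auto
  next
    case False
    define d where "d = 1 - a"
    have d0: "d > 0" using a1 False unfolding d_def by simp
    define w where "w i = (if i = 0 then 1 else 0) - u i" for i
    have w0: "w 0 = of_real d" unfolding w_def d_def ua by simp
    have ww: "(\<Sum>k<n. cnj (w k) * w k) = of_real (2 * d)"
    proof -
      have "(\<Sum>k<n. cnj (w k) * w k) = (\<Sum>k<n. (if k = 0 then 1 else 0) - (if k = 0 then cnj (u k) + u k else 0) + cnj (u k) * u k)"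
        unfolding w_def by (intro sum.cong refl) (auto simp: algebra_simps)
      also have "\<dots> = 1 - (cnj (u 0) + u 0) + (\<Sum>k<n. cnj (u k) * u k)"
        using n by (simp add: sum.distrib sum_subtractf)
      also have "(\<Sum>k<n. cnj (u k) * u k) = of_real (\<Sum>k<n. cmod (u k)^2)"
        by (simp only: of_real_sum complex_norm_square mult.commute)
      finally show ?thesis using nrm ua unfolding d_def by simp
    qed
    define H where "H = mat n n (\<lambda>(i,j). (if i = j then 1 else 0) - w i * (cnj (w j) / of_real d))"
    have Hc: "H \<in> carrier_mat n n" unfolding H_def by simp
    show ?thesis
    proof (intro exI[of _ H] conjI allI impI Hc)
      show "adj H = H" by (rule eq_matI) (auto simp: H_def mult.commute)
      show "H * H = 1\<^sub>m n"
      proof (rule eq_matI)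
        fix i j assume i: "i < dim_row (1\<^sub>m n :: complex mat)" and j: "j < dim_col (1\<^sub>m n :: complex mat)"
        then have ij: "i < n" "j < n" by auto
        have "(H * H) $$ (i,j) = (\<Sum>k<n. ((if i = k then 1 else 0) - w i * (cnj (w k) / of_real d)) *
                ((if k = j then 1 else 0) - w k * (cnj (w j) / of_real d)))"
          using mult_entry[OF Hc Hc ij] ij by (simp add: H_def)
        also have "\<dots> = (if i = j then 1 else 0) - 2 * w i * (cnj (w j) / of_real d) +
             w i * (cnj (w j) / of_real d) * (\<Sum>k<n. (cnj (w k) / of_real d) * w k)"
          by (rule rank1_sq_sum[OF ij])
        also have "(\<Sum>k<n. (cnj (w k) / of_real d) * w k) = 2"
          using ww d0 by (simp add: sum_divide_distrib[symmetric] divide_simps)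
        finally show "(H * H) $$ (i,j) = 1\<^sub>m n $$ (i,j)" using ij by simp
      qed (auto simp: H_def)
      fix i assume i: "i < n"
      have c1: "cnj (w 0) / of_real d = 1" using w0 d0 by simp
      have "H $$ (i, 0) = (if i = 0 then 1 else 0) - w i" using i n unfolding H_def by (simp add: c1 times_divide_eq_right[symmetric] del: times_divide_eq_right)
      then show "H $$ (i, 0) = u i" by (simp add: w_def)
    qed
  qed
qed

lemma bf_shift:
  "bf (Suc m) P w w = cnj (w 0) * P $$ (0,0) * w 0 + (\<Sum>l<m. cnj (w 0) * P $$ (0, Suc l) * w (Suc l))
     + (\<Sum>k<m. cnj (w (Suc k)) * P $$ (Suc k, 0) * w 0) + bf m (mat m m (\<lambda>(i,j). P $$ (Suc i, Suc j))) (\<lambda>k. w (Suc k)) (\<lambda>k. w (Suc k))"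
proof -
  have "bf m (mat m m (\<lambda>(i,j). P $$ (Suc i, Suc j))) (\<lambda>k. w (Suc k)) (\<lambda>k. w (Suc k)) =
     (\<Sum>k<m. \<Sum>l<m. cnj (w (Suc k)) * P $$ (Suc k, Suc l) * w (Suc l))"
    unfolding bf_def by (intro sum.cong refl) auto
  then show ?thesis
    unfolding bf_def sum.lessThan_Suc_shift by (simp add: sum.distrib del: lessThan_Suc)
qed

lemma eigen_unit:
  fixes M :: "complex mat"
  assumes M: "M \<in> carrier_mat n n" and n: "0 < n"
  shows "\<exists>e u. (\<forall>i<n. (\<Sum>l<n. M $$ (i,l) * u l) = e * u i) \<and> Im (u 0) = 0 \<and> Re (u 0) \<ge> 0
     \<and> (\<Sum>i<n. cmod (u i)^2) = 1"
proof -
  obtain e where "e \<in> spectrum M" using spectrum_non_empty[OF M n] by blast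
  then obtain v where ev: "eigenvector M v e" unfolding spectrum_def eigenvalue_def by auto
  then have v: "v \<in> carrier_vec n" "v \<noteq> 0\<^sub>v n" "M *\<^sub>v v = e \<cdot>\<^sub>v v"
    unfolding eigenvector_def using M by auto
  have Mv: "(\<Sum>l<n. M $$ (i,l) * v $ l) = e * v $ i" if "i < n" for i
    using arg_cong[OF v(3), of "\<lambda>x. x $ i"] mult_vec_entry[OF M v(1) that] that v(1) by simp
  define nv where "nv = (\<Sum>i<n. cmod (v $ i)^2)"
  obtain i0 where i0: "i0 < n" "v $ i0 \<noteq> 0"
    using v(1,2) by (metis eq_vecI index_zero_vec(1,2) carrier_vecD)
  have nv0: "nv > 0" unfolding nv_def
  proof (rule sum_pos2[of "{..<n}" i0])
    show "0 < cmod (v $ i0)^2" using i0 by simp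
  qed (use i0 in auto)
  define ph where "ph = (if v $ 0 = 0 then 1 else cnj (v $ 0) / of_real (cmod (v $ 0)))"
  have ph1: "cmod ph = 1" unfolding ph_def by (auto simp: norm_divide)
  define c where "c = ph / of_real (sqrt nv)"
  define u where "u i = c * v $ i" for i
  show ?thesis
  proof (intro exI[of _ e] exI[of _ u] conjI allI impI)
    fix i assume i: "i < n"
    show "(\<Sum>l<n. M $$ (i,l) * u l) = e * u i"
      using Mv[OF i] unfolding u_def by (simp add: sum_distrib_left[symmetric] algebra_simps)
  next
    have "u 0 = of_real (cmod (v $ 0) / sqrt nv)"
    proof (cases "v $ 0 = 0")
      case True then show ?thesis unfolding u_def by simp
    next
      case False
      have "cnj (v $ 0) * v $ 0 = of_real (cmod (v $ 0) ^ 2)" by (simp only: complex_norm_square mult.commute)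
      then show ?thesis using False unfolding u_def c_def ph_def
        by (simp add: power2_eq_square divide_simps)
    qed
    then show "Im (u 0) = 0" "Re (u 0) \<ge> 0" using nv0 by auto
  next
    have "(\<Sum>i<n. cmod (u i)^2) = (\<Sum>i<n. cmod (v $ i)^2 / nv)"
      unfolding u_def c_def using nv0 ph1 by (simp add: norm_mult norm_divide power_divide)
    also have "\<dots> = 1" unfolding sum_divide_distrib[symmetric] nv_def[symmetric] using nv0 by simp
    finally show "(\<Sum>i<n. cmod (u i)^2) = 1" .
  qed
qed

lemma psd_root_exists:
  "psd n M \<Longrightarrow> \<exists>R. psd n R \<and> R * R = M"
proof (induction n arbitrary: M)
  case 0
  then have M: "M \<in> carrier_mat 0 0" by (auto simp: psd_def)
  show ?case
  proof (intro exI[of _ "0\<^sub>m 0 0"] conjI)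
    show "psd 0 (0\<^sub>m 0 0 :: complex mat)" unfolding psd_iff_bf bf_def by auto
    show "0\<^sub>m 0 0 * 0\<^sub>m 0 0 = M" by (rule eq_matI) (use M in auto)
  qed
next
  case (Suc m)
  define n where "n = Suc m"
  have Mp: "psd n M" using Suc.prems n_def by simp
  have M: "M \<in> carrier_mat n n" using Mp psd_def by auto
  have Mh: "adj M = M" using psd_herm[OF Mp] .
  obtain e u where eu: "\<forall>i<n. (\<Sum>l<n. M $$ (i,l) * u l) = e * u i" "Im (u 0) = 0" "Re (u 0) \<ge> 0"
      "(\<Sum>i<n. cmod (u i)^2) = 1"
    using eigen_unit[OF M] n_def by auto
  obtain H where H: "H \<in> carrier_mat n n" "adj H = H" "H * H = 1\<^sub>m n" "\<forall>i<n. H $$ (i,0) = u i"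
    using householder[of n u] eu n_def by auto
  define N where "N = H * M * H"
  have Nc: "N \<in> carrier_mat n n" unfolding N_def using H M by auto
  have Np: "psd n N" unfolding psd_iff_bf
  proof (intro conjI allI Nc)
    fix w :: "nat \<Rightarrow> complex"
    show "Im (bf n N w w) = 0" "Re (bf n N w w) \<ge> 0"
      unfolding N_def bf_conj_herm[OF H(1) M H(2)] using psd_bf[OF Mp] by auto
  qed
  have N0: "N $$ (i,0) = (if i = 0 then e else 0)" if i: "i < n" for i
  proof -
    have MH: "(M * H) $$ (k,0) = e * u k" if "k < n" for k
      using mult_entry[OF M H(1) that, of 0] eu(1) that H(4) n_def by auto
    have "N $$ (i,0) = (H * (M * H)) $$ (i,0)" unfolding N_def using H M by simp
    also have "\<dots> = (\<Sum>k<n. H $$ (i,k) * (e * u k))"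
      using mult_entry[OF H(1) _ i, of "M * H" n 0] M H MH n_def by auto
    also have "\<dots> = e * (\<Sum>k<n. H $$ (i,k) * H $$ (k,0))"
      using H(4) by (simp add: sum_distrib_left algebra_simps)
    also have "(\<Sum>k<n. H $$ (i,k) * H $$ (k,0)) = (H * H) $$ (i,0)"
      using mult_entry[OF H(1) H(1) i, of 0] n_def by simp
    finally show ?thesis using H(3) i n_def by auto
  qed
  have eR: "Im e = 0" "Re e \<ge> 0" using psd_entries(2,3)[OF Np, of 0] N0[of 0] n_def by auto
  have N0': "N $$ (0,j) = (if j = 0 then e else 0)" if j: "j < n" for j
  proof -
    have "N $$ (0,j) = cnj (N $$ (j,0))" using psd_entries(1)[OF Np j, of 0] n_def by simp
    then show ?thesis using N0[OF j] eR by (auto simp: complex_eq_iff)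
  qed
  define M' where "M' = mat m m (\<lambda>(i,j). N $$ (Suc i, Suc j))"
  have M'p: "psd m M'" unfolding psd_iff_bf
  proof (intro conjI allI)
    show "M' \<in> carrier_mat m m" unfolding M'_def by simp
    fix w :: "nat \<Rightarrow> complex"
    define w' where "w' k = (if k = 0 then 0 else w (k - 1))" for k
    have "bf n N w' w' = bf m M' w w"
      using bf_shift[of m N w'] unfolding n_def M'_def w'_def by simp
    then show "Im (bf m M' w w) = 0" "Re (bf m M' w w) \<ge> 0" using psd_bf[OF Np, of w'] by auto
  qed
  obtain R' where R': "psd m R'" "R' * R' = M'" using Suc.IH[OF M'p] by auto
  have R'c: "R' \<in> carrier_mat m m" using R' psd_def by auto
  define se where "se = complex_of_real (sqrt (Re e))"
  define B where "B = mat n n (\<lambda>(i,j). if i = 0 \<and> j = 0 then se else if i = 0 \<or> j = 0 then 0 else R' $$ (i - 1, j - 1))"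
  have Bc: "B \<in> carrier_mat n n" unfolding B_def by simp
  have Bp: "psd n B" unfolding psd_iff_bf
  proof (intro conjI allI Bc)
    fix w :: "nat \<Rightarrow> complex"
    have "mat m m (\<lambda>(i,j). B $$ (Suc i, Suc j)) = R'"
      by (rule eq_matI) (use R'c in \<open>auto simp: B_def n_def\<close>)
    moreover have "(\<Sum>l<m. cnj (w 0) * B $$ (0, Suc l) * w (Suc l)) = 0"
      by (rule sum.neutral) (auto simp: B_def n_def)
    moreover have "(\<Sum>k<m. cnj (w (Suc k)) * B $$ (Suc k, 0) * w 0) = 0"
      by (rule sum.neutral) (auto simp: B_def n_def)
    ultimately have "bf n B w w = cnj (w 0) * se * w 0 + bf m R' (\<lambda>k. w (Suc k)) (\<lambda>k. w (Suc k))"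
      using bf_shift[of m B w] unfolding n_def by (simp add: B_def n_def)
    moreover have "cnj (w 0) * se * w 0 = of_real (sqrt (Re e) * cmod (w 0)^2)"
      unfolding se_def using complex_norm_square[of "w 0"] by (simp add: mult.commute mult.left_commute)
    ultimately show "Im (bf n B w w) = 0" "Re (bf n B w w) \<ge> 0"
      using psd_bf[OF R'(1), of "\<lambda>k. w (Suc k)"] eR by auto
  qed
  have BB: "B * B = N"
  proof (rule eq_matI)
    fix i j assume "i < dim_row N" "j < dim_col N"
    then have ij: "i < n" "j < n" using Nc by auto
    have "(B * B) $$ (i,j) = (\<Sum>l<n. B $$ (i,l) * B $$ (l,j))" using mult_entry[OF Bc Bc ij] .
    also have "\<dots> = B $$ (i,0) * B $$ (0,j) + (\<Sum>l<m. B $$ (i,Suc l) * B $$ (Suc l,j))"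
      unfolding n_def sum.lessThan_Suc_shift by simp
    also have "\<dots> = N $$ (i,j)"
    proof (cases i)
      case 0
      show ?thesis
      proof (cases j)
        case 0
        have "se * se = e" unfolding se_def using eR
          by (simp add: complex_eq_iff)
        then show ?thesis using \<open>i = 0\<close> 0 N0[of 0] n_def by (simp add: B_def)
      next
        case (Suc j')
        then show ?thesis using \<open>i = 0\<close> N0'[OF ij(2)] ij n_def by (simp add: B_def)
      qed
    next
      case (Suc i')
      show ?thesis
      proof (cases j)
        case 0
        then show ?thesis using Suc N0[OF ij(1)] ij n_def by (simp add: B_def)
      next
        case (Suc j')
        have "(\<Sum>l<m. B $$ (i,Suc l) * B $$ (Suc l,j)) = (\<Sum>l<m. R' $$ (i',l) * R' $$ (l,j'))"
          by (intro sum.cong refl) (use \<open>i = Suc i'\<close> Suc ij n_def in \<open>auto simp: B_def\<close>)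
        also have "\<dots> = (R' * R') $$ (i', j')"
          using mult_entry[OF R'c R'c, of i' j'] ij \<open>i = Suc i'\<close> Suc n_def by simp
        also have "\<dots> = N $$ (i,j)" using R'(2) \<open>i = Suc i'\<close> Suc ij n_def by (simp add: M'_def)
        finally show ?thesis using \<open>i = Suc i'\<close> Suc ij n_def by (simp add: B_def)
      qed
    qed
    finally show "(B * B) $$ (i,j) = N $$ (i,j)" .
  qed (use Bc Nc in auto)
  define R where "R = H * B * H"
  have Rp: "psd n R" unfolding psd_iff_bf
  proof (intro conjI allI)
    show "R \<in> carrier_mat n n" unfolding R_def using H Bc by auto
    fix w :: "nat \<Rightarrow> complex"
    show "Im (bf n R w w) = 0" "Re (bf n R w w) \<ge> 0"
      unfolding R_def bf_conj_herm[OF H(1) Bc H(2)] using psd_bf[OF Bp] by auto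
  qed
  have HB: "H * (H * X) = X" if "X \<in> carrier_mat n n" for X
    using H that by (simp add: assoc_mult_mat[symmetric, of H n n H n X n])
  have BH: "(X * H) * H = X" if "X \<in> carrier_mat n n" for X
    using H that by (simp add: assoc_mult_mat[of X n n H n H n])
  have HBc: "H * B \<in> carrier_mat n n" "H * B * H \<in> carrier_mat n n" "B * H \<in> carrier_mat n n"
    using H Bc by auto
  have "R * R = (H * B) * (H * (H * B * H))"
    unfolding R_def by (rule assoc_mult_mat[OF HBc(1) H(1) HBc(2)])
  also have "H * (H * B * H) = B * H"
  proof -
    have "H * B * H = H * (B * H)" by (rule assoc_mult_mat[OF H(1) Bc H(1)])
    then show ?thesis using HB[OF HBc(3)] by simp
  qed
  also have "(H * B) * (B * H) = H * (B * B) * H"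
  proof -
    have "(H * B) * (B * H) = H * (B * (B * H))" by (rule assoc_mult_mat[OF H(1) Bc HBc(3)])
    also have "B * (B * H) = (B * B) * H" by (rule assoc_mult_mat[symmetric, OF Bc Bc H(1)])
    also have "H * ((B * B) * H) = H * (B * B) * H"
      by (rule assoc_mult_mat[symmetric, OF H(1) _ H(1)]) (use Bc in auto)
    finally show ?thesis .
  qed
  also have "\<dots> = H * (H * M * H) * H" using BB N_def by simp
  also have "\<dots> = M"
  proof -
    have "H * (H * M * H) * H = H * (H * (M * H)) * H" using H M by simp
    also have "\<dots> = (M * H) * H" using HB[of "M * H"] H M by simp
    also have "\<dots> = M" using BH M by simp
    finally show ?thesis .
  qed
  finally show ?case using Rp n_def by auto
qed

lemma adj_adj: "adj (adj A) = A"
  by (rule eq_matI) (auto simp: adj_def)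

lemma psd_AA:
  assumes A: "A \<in> carrier_mat n m"
  shows "psd m (adj A * A)"
  unfolding psd_iff_bf
proof (intro conjI allI)
  show "adj A * A \<in> carrier_mat m m" using A by auto
  fix u :: "nat \<Rightarrow> complex"
  define y where "y i = (\<Sum>l<m. A $$ (i,l) * u l)" for i
  have "bf m (adj A * A) u u = (\<Sum>k<m. \<Sum>l<m. \<Sum>i<n. cnj (u k) * cnj (A $$ (i,k)) * A $$ (i,l) * u l)"
    unfolding bf_def
    by (intro sum.cong refl) (use A in \<open>simp add: row_col_sum[OF adj_carrier[OF A] A] sum_distrib_left sum_distrib_right mult.assoc\<close>)
  also have "\<dots> = (\<Sum>i<n. \<Sum>k<m. \<Sum>l<m. cnj (u k) * cnj (A $$ (i,k)) * A $$ (i,l) * u l)"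
  proof -
    have "(\<Sum>k<m. \<Sum>l<m. \<Sum>i<n. cnj (u k) * cnj (A $$ (i,k)) * A $$ (i,l) * u l) =
          (\<Sum>k<m. \<Sum>i<n. \<Sum>l<m. cnj (u k) * cnj (A $$ (i,k)) * A $$ (i,l) * u l)"
      by (intro sum.cong refl sum.swap)
    also have "\<dots> = (\<Sum>i<n. \<Sum>k<m. \<Sum>l<m. cnj (u k) * cnj (A $$ (i,k)) * A $$ (i,l) * u l)"
      by (rule sum.swap)
    finally show ?thesis .
  qed
  also have "\<dots> = (\<Sum>i<n. cnj (y i) * y i)"
    unfolding y_def cnj_sum sum_product by (simp add: mult_ac)
  also have "\<dots> = of_real (\<Sum>i<n. cmod (y i)^2)"
    by (simp only: of_real_sum complex_norm_square mult.commute)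
  finally show "Im (bf m (adj A * A) u u) = 0" "Re (bf m (adj A * A) u u) \<ge> 0"
    by (auto intro: sum_nonneg)
qed

lemma the_root:
  assumes "psd n M"
  shows "psd n (THE P. psd n P \<and> P * P = M) \<and> (THE P. psd n P \<and> P * P = M) * (THE P. psd n P \<and> P * P = M) = M"
proof -
  have "\<exists>!P. psd n P \<and> P * P = M"
    using psd_root_exists[OF assms] psd_root_unique by blast
  then show ?thesis by (rule theI')
qed

lemma the_root_eq:
  assumes "psd n R" "R * R = M"
  shows "(THE P. psd n P \<and> P * P = M) = R"
  using assms psd_root_unique by blast

lemma trace_norm_eq:
  assumes "A \<in> carrier_mat n m" "psd m R" "R * R = adj A * A"
  shows "trace_norm A = Re (mtrace R)"
  unfolding trace_norm_def using assms the_root_eq[OF assms(2,3)] by simp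

lemma psd_trace_nonneg:
  assumes "psd n R" shows "Re (mtrace R) \<ge> 0" "Im (mtrace R) = 0"
proof -
  have R: "R \<in> carrier_mat n n" using assms psd_def by auto
  have "Re (mtrace R) = (\<Sum>i<n. Re (R $$ (i,i)))" "Im (mtrace R) = (\<Sum>i<n. Im (R $$ (i,i)))"
    unfolding mtrace_def using R by auto
  then show "Re (mtrace R) \<ge> 0" "Im (mtrace R) = 0"
    using psd_entries(2,3)[OF assms] by (auto intro: sum_nonneg)
qed

lemma trace_norm_nonneg:
  assumes "A \<in> carrier_mat n m" shows "trace_norm A \<ge> 0"
  unfolding trace_norm_def using assms the_root[OF psd_AA[OF assms]] psd_trace_nonneg by auto

definition kron :: "complex mat \<Rightarrow> complex mat \<Rightarrow> complex mat" where
  "kron A B = mat (dim_row A * dim_row B) (dim_col A * dim_col B)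
     (\<lambda>(r,s). A $$ (r div dim_row B, s div dim_col B) * B $$ (r mod dim_row B, s mod dim_col B))"

lemma sum_div_mod:
  fixes g :: "nat \<Rightarrow> nat \<Rightarrow> 'a :: comm_monoid_add"
  shows "(\<Sum>t<b * d. g (t div d) (t mod d)) = (\<Sum>x<b. \<Sum>y<d. g x y)"
proof (induction b)
  case 0 then show ?case by simp
next
  case (Suc b)
  have "(\<Sum>t<Suc b * d. g (t div d) (t mod d)) = (\<Sum>t\<in>{0..<b*d}. g (t div d) (t mod d)) + (\<Sum>t\<in>{b*d..<b*d+d}. g (t div d) (t mod d))"
    by (subst sum.atLeastLessThan_concat) (auto simp: lessThan_atLeast0 add.commute)
  also have "(\<Sum>t\<in>{b*d..<b*d+d}. g (t div d) (t mod d)) = (\<Sum>y<d. g b y)"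
  proof -
    have "(\<Sum>t\<in>{b*d..<b*d+d}. g (t div d) (t mod d)) = (\<Sum>y\<in>{0..<d}. g ((y + b*d) div d) ((y + b*d) mod d))"
    proof -
      have "{b*d..<b*d+d} = {0 + b*d..<d + b*d}" by (simp add: add.commute)
      then show ?thesis by (simp only: sum.shift_bounds_nat_ivl)
    qed
    also have "\<dots> = (\<Sum>y<d. g b y)"
      by (auto simp: lessThan_atLeast0 intro!: sum.cong)
    finally show ?thesis .
  qed
  finally show ?case using Suc by (simp add: lessThan_atLeast0)
qed

lemma kron_carrier[simp]: "A \<in> carrier_mat a b \<Longrightarrow> B \<in> carrier_mat c d \<Longrightarrow> kron A B \<in> carrier_mat (a*c) (b*d)"
  unfolding kron_def by auto

lemma kron_dims[simp]: "dim_row (kron A B) = dim_row A * dim_row B" "dim_col (kron A B) = dim_col A * dim_col B"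
  unfolding kron_def by auto

lemma kron_index:
  "r < dim_row A * dim_row B \<Longrightarrow> s < dim_col A * dim_col B \<Longrightarrow>
   kron A B $$ (r,s) = A $$ (r div dim_row B, s div dim_col B) * B $$ (r mod dim_row B, s mod dim_col B)"
  unfolding kron_def by auto

lemma div_bound: "r < a * (b::nat) \<Longrightarrow> r div b < a"
  by (simp add: less_mult_imp_div_less)

lemma mod_bound: "r < a * (b::nat) \<Longrightarrow> r mod b < b"
  by (metis mod_less_divisor mult_zero_right not_gr_zero not_less0)

lemma kron_mult:
  assumes A: "A \<in> carrier_mat a b" and B: "B \<in> carrier_mat c d" and C: "C \<in> carrier_mat b e" and D: "D \<in> carrier_mat d f"
  shows "kron A B * kron C D = kron (A * C) (B * D)"
proof (rule eq_matI)
  fix r s assume "r < dim_row (kron (A * C) (B * D))" "s < dim_col (kron (A * C) (B * D))"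
  then have rs: "r < a * c" "s < e * f" using A B C D by auto
  have "(kron A B * kron C D) $$ (r,s) = (\<Sum>t<b*d. kron A B $$ (r,t) * kron C D $$ (t,s))"
    using mult_entry[OF kron_carrier[OF A B] kron_carrier[OF C D] rs] .
  also have "\<dots> = (\<Sum>t<b*d. (A $$ (r div c, t div d) * C $$ (t div d, s div f)) * (B $$ (r mod c, t mod d) * D $$ (t mod d, s mod f)))"
    by (intro sum.cong refl) (use A B C D rs in \<open>auto simp: kron_index mult_ac\<close>)
  also have "\<dots> = (\<Sum>x<b. \<Sum>y<d. (A $$ (r div c, x) * C $$ (x, s div f)) * (B $$ (r mod c, y) * D $$ (y, s mod f)))"
    by (rule sum_div_mod[of "\<lambda>x y. (A $$ (r div c, x) * C $$ (x, s div f)) * (B $$ (r mod c, y) * D $$ (y, s mod f))"])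
  also have "\<dots> = (A * C) $$ (r div c, s div f) * (B * D) $$ (r mod c, s mod f)"
    using mult_entry[OF A C div_bound[OF rs(1)] div_bound[OF rs(2)]] mult_entry[OF B D mod_bound[OF rs(1)] mod_bound[OF rs(2)]]
    by (simp add: sum_product)
  also have "\<dots> = kron (A * C) (B * D) $$ (r,s)"
    using A B C D rs by (simp add: kron_index)
  finally show "(kron A B * kron C D) $$ (r,s) = kron (A * C) (B * D) $$ (r,s)" .
qed (use A B C D in auto)

lemma kron_adj:
  assumes A: "A \<in> carrier_mat a b" and B: "B \<in> carrier_mat c d"
  shows "adj (kron A B) = kron (adj A) (adj B)"
proof (rule eq_matI)
  fix r s assume "r < dim_row (kron (adj A) (adj B))" "s < dim_col (kron (adj A) (adj B))"
  then have rs: "r < b * d" "s < a * c" using A B by auto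
  show "adj (kron A B) $$ (r,s) = kron (adj A) (adj B) $$ (r,s)"
    using A B rs div_bound[OF rs(1)] div_bound[OF rs(2)] mod_bound[OF rs(1)] mod_bound[OF rs(2)]
    by (simp add: kron_index)
qed (use A B in auto)

lemma kron_trace:
  assumes A: "A \<in> carrier_mat a a" and B: "B \<in> carrier_mat c c"
  shows "mtrace (kron A B) = mtrace A * mtrace B"
proof -
  have "mtrace (kron A B) = (\<Sum>t<a*c. A $$ (t div c, t div c) * B $$ (t mod c, t mod c))"
    unfolding mtrace_def using A B by (auto simp: kron_index intro!: sum.cong)
  also have "\<dots> = (\<Sum>x<a. \<Sum>y<c. A $$ (x, x) * B $$ (y, y))"
    by (rule sum_div_mod[of "\<lambda>x y. A $$ (x, x) * B $$ (y, y)"])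
  also have "\<dots> = mtrace A * mtrace B"
    unfolding mtrace_def using A B by (simp add: sum_product)
  finally show ?thesis .
qed

lemma psd_herm_sq:
  assumes "K \<in> carrier_mat n n" "adj K = K"
  shows "psd n (K * K)"
  using psd_AA[OF assms(1)] assms(2) by simp

lemma psd_kron:
  assumes P: "psd a P" and Q: "psd c Q"
  shows "psd (a * c) (kron P Q)"
proof -
  obtain S where S: "psd a S" "S * S = P" using psd_root_exists[OF P] by blast
  obtain T where T: "psd c T" "T * T = Q" using psd_root_exists[OF Q] by blast
  have Sc: "S \<in> carrier_mat a a" and Tc: "T \<in> carrier_mat c c" using S T psd_def by auto
  have "kron P Q = kron S T * kron S T" using kron_mult[OF Sc Tc Sc Tc] S T by simp
  moreover have "adj (kron S T) = kron S T" using kron_adj[OF Sc Tc] psd_herm[OF S(1)] psd_herm[OF T(1)] by simp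
  ultimately show ?thesis using psd_herm_sq[of "kron S T" "a * c"] Sc Tc by simp
qed

lemma trace_norm_kron:
  assumes D: "D \<in> carrier_mat a b" and X: "X \<in> carrier_mat c d"
  shows "trace_norm (kron D X) = trace_norm D * trace_norm X"
proof -
  obtain RD where RD: "psd b RD" "RD * RD = adj D * D" using psd_root_exists[OF psd_AA[OF D]] by blast
  obtain RX where RX: "psd d RX" "RX * RX = adj X * X" using psd_root_exists[OF psd_AA[OF X]] by blast
  have RDc: "RD \<in> carrier_mat b b" and RXc: "RX \<in> carrier_mat d d" using RD RX psd_def by auto
  have "adj (kron D X) * kron D X = kron (adj D * D) (adj X * X)"
    using kron_adj[OF D X] kron_mult[OF adj_carrier[OF D] adj_carrier[OF X] D X] by simp
  also have "\<dots> = kron RD RX * kron RD RX" using kron_mult[OF RDc RXc RDc RXc] RD RX by simp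
  finally have "trace_norm (kron D X) = Re (mtrace (kron RD RX))"
    using trace_norm_eq[OF kron_carrier[OF D X] psd_kron[OF RD(1) RX(1)]] by simp
  also have "\<dots> = Re (mtrace RD) * Re (mtrace RX)"
    using kron_trace[OF RDc RXc] psd_trace_nonneg(2)[OF RD(1)] psd_trace_nonneg(2)[OF RX(1)] by simp
  also have "\<dots> = trace_norm D * trace_norm X"
    using trace_norm_eq[OF D RD] trace_norm_eq[OF X RX] by simp
  finally show ?thesis .
qed




lemma sum2: "(\<Sum>i<(2::nat). f i) = f 0 + f 1"
  by (simp add: numeral_2_eq_2)

lemma adj_one[simp]: "adj (1\<^sub>m n) = 1\<^sub>m n"
  by (rule eq_matI) (auto simp: adj_def)

lemma trace_norm_one1: "trace_norm (1\<^sub>m 1) = 1"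
proof -
  have "psd 1 (1\<^sub>m 1 * 1\<^sub>m 1)" by (rule psd_herm_sq) auto
  then have p: "psd 1 (1\<^sub>m 1)" by simp
  have "trace_norm (1\<^sub>m 1) = Re (mtrace (1\<^sub>m 1))"
    by (rule trace_norm_eq[OF _ p]) auto
  then show ?thesis by (simp add: mtrace_def)
qed

lemma trace_norm_ge_entry:
  assumes D: "D \<in> carrier_mat 2 2"
  shows "trace_norm D \<ge> cmod (D $$ (0,0))"
proof -
  obtain R where R: "psd 2 R" "R * R = adj D * D" using psd_root_exists[OF psd_AA[OF D]] by blast
  have Rc: "R \<in> carrier_mat 2 2" using R psd_def by auto
  have tn: "trace_norm D = Re (mtrace R)" using trace_norm_eq[OF D R] .
  define p where "p = Re (R $$ (0,0))"
  define q where "q = Re (R $$ (1,1))"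
  define z where "z = R $$ (0,1)"
  have e00: "R $$ (0,0) = of_real p" using psd_entries(2)[OF R(1), of 0 0] unfolding p_def by (simp add: complex_eq_iff)
  have e11: "R $$ (1,1) = of_real q" using psd_entries(2)[OF R(1), of 1 1] unfolding q_def by (simp add: complex_eq_iff)
  have e01: "R $$ (0,1) = z" unfolding z_def ..
  have e10: "R $$ (1,0) = cnj z" using psd_entries(1)[OF R(1), of 0 1] unfolding z_def by simp
  have p0: "p \<ge> 0" and q0: "q \<ge> 0" using psd_entries(3)[OF R(1), of 0 0] psd_entries(3)[OF R(1), of 1 1] unfolding p_def q_def by auto
  have tr: "mtrace R = of_real (p + q)" unfolding mtrace_def using Rc e00 e11 by (simp add: sum2)
  have det: "cmod z ^ 2 \<le> p * q"
  proof (cases "p = 0")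
    case True
    have "bf 2 R (\<lambda>k. if k = 0 then 1 else 0) (\<lambda>k. if k = 0 then 1 else 0) = 0"
      unfolding bf_def using e00 True by (simp add: sum2)
    then have "(\<Sum>l<2. R $$ (1,l) * (if l = 0 then 1 else 0)) = 0" by (rule psd_null[OF R(1)]) simp
    then have "R $$ (1,0) = 0" by (simp add: sum2)
    then show ?thesis using e10 True by simp
  next
    case False
    then have pp: "p > 0" using p0 by simp
    define u where "u k = (if k = 0 then - z else if k = 1 then of_real p else 0)" for k :: nat
    have zz: "cnj z * z = of_real (cmod z ^ 2)" by (simp only: complex_norm_square mult.commute)
    have "bf 2 R u u = cnj (- z) * of_real p * (- z) + cnj (- z) * z * of_real p
        + of_real p * cnj z * (- z) + of_real p * of_real q * of_real p"
    proof -
      have "R $$ (Suc 0, Suc 0) = of_real q" "R $$ (0, Suc 0) = z" "R $$ (Suc 0, 0) = cnj z"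
        using e11 e01 e10 by simp_all
      then show ?thesis unfolding bf_def by (simp add: sum2 u_def e00 del: complex_cnj_minus)
    qed
    also have "\<dots> = of_real p * of_real p * of_real q - of_real p * (cnj z * z)"
      by (simp add: algebra_simps)
    also have "\<dots> = of_real (p * (p * q - cmod z ^ 2))" unfolding zz by (simp add: algebra_simps)
    finally have "bf 2 R u u = of_real (p * (p * q - cmod z ^ 2))" .
    then have "p * (p * q - cmod z ^ 2) \<ge> 0" using psd_bf[OF R(1), of u] by simp
    then show ?thesis using pp mult_pos_neg[of p "p*q - cmod z ^ 2"] by linarith
  qed
  have sq: "cnj w * w = of_real (cmod w ^ 2)" "w * cnj w = of_real (cmod w ^ 2)" for w :: complex
    by (simp_all only: complex_norm_square mult.commute)
  have RR: "(R * R) $$ (0,0) + (R * R) $$ (1,1) = of_real (p^2 + q^2 + 2 * cmod z ^ 2)"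
  proof -
    have E: "R $$ (Suc 0, Suc 0) = of_real q" "R $$ (0, Suc 0) = z" "R $$ (Suc 0, 0) = cnj z"
      using e11 e01 e10 by simp_all
    have "(R * R) $$ (0,0) + (R * R) $$ (1,1) = of_real p * of_real p + z * cnj z + (cnj z * z + of_real q * of_real q)"
      using mult_entry[OF Rc Rc, of 0 0] mult_entry[OF Rc Rc, of 1 1] by (simp add: sum2 E e00)
    also have "\<dots> = of_real (p^2 + q^2 + 2 * cmod z ^ 2)" unfolding sq by (simp add: power2_eq_square)
    finally show ?thesis .
  qed
  have DD: "(adj D * D) $$ (0,0) + (adj D * D) $$ (1,1) =
      of_real (cmod (D $$ (0,0))^2 + cmod (D $$ (1,0))^2 + cmod (D $$ (0,1))^2 + cmod (D $$ (1,1))^2)"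
  proof -
    have "(adj D * D) $$ (0,0) + (adj D * D) $$ (1,1) = cnj (D $$ (0,0)) * D $$ (0,0) + cnj (D $$ (1,0)) * D $$ (1,0)
       + (cnj (D $$ (0,1)) * D $$ (0,1) + cnj (D $$ (1,1)) * D $$ (1,1))"
      using mult_entry[OF adj_carrier[OF D] D, of 0 0] mult_entry[OF adj_carrier[OF D] D, of 1 1] D
      by (simp add: sum2)
    also have "\<dots> = of_real (cmod (D $$ (0,0))^2 + cmod (D $$ (1,0))^2 + cmod (D $$ (0,1))^2 + cmod (D $$ (1,1))^2)"
      unfolding sq by simp
    finally show ?thesis .
  qed
  have eq: "p^2 + q^2 + 2 * cmod z ^ 2 = cmod (D $$ (0,0))^2 + cmod (D $$ (1,0))^2 + cmod (D $$ (0,1))^2 + cmod (D $$ (1,1))^2"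
  proof -
    have "(of_real (p^2 + q^2 + 2 * cmod z ^ 2) :: complex) = of_real (cmod (D $$ (0,0))^2 + cmod (D $$ (1,0))^2 + cmod (D $$ (0,1))^2 + cmod (D $$ (1,1))^2)"
      unfolding RR[symmetric] DD[symmetric] R(2) ..
    then show ?thesis by (simp only: of_real_eq_iff)
  qed
  have "cmod (D $$ (0,0))^2 \<le> (p + q)^2"
  proof -
    have "cmod (D $$ (0,0))^2 \<le> p^2 + q^2 + 2 * cmod z ^ 2"
      unfolding eq by (simp add: add_increasing2)
    also have "\<dots> \<le> (p + q)^2" using det by (simp add: power2_eq_square algebra_simps)
    finally show ?thesis .
  qed
  then have "cmod (D $$ (0,0)) \<le> p + q" by (rule power2_le_imp_le) (use p0 q0 in auto)
  then show ?thesis using tn tr by simp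
qed

lemma ext_lin:
  assumes D: "D \<in> carrier_mat 2 2" and lin: "\<And>Y. Y \<in> carrier_mat 1 1 \<Longrightarrow> \<Theta> Y = Y $$ (0,0) \<cdot>\<^sub>m D"
    and X: "X \<in> carrier_mat k k"
  shows "ext 1 2 k \<Theta> X = kron D X"
proof (rule eq_matI)
  fix r s assume "r < dim_row (kron D X)" "s < dim_col (kron D X)"
  then have rs: "r < 2 * k" "s < 2 * k" using D X by auto
  have b: "block 1 k (r mod k) (s mod k) X \<in> carrier_mat 1 1" unfolding block_def by simp
  have b0: "block 1 k (r mod k) (s mod k) X $$ (0,0) = X $$ (r mod k, s mod k)" unfolding block_def by simp
  show "ext 1 2 k \<Theta> X $$ (r, s) = kron D X $$ (r, s)"
    unfolding ext_def using rs lin[OF b] b0 D X div_bound[OF rs(1)] div_bound[OF rs(2)]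
    by (simp add: kron_index mult.commute)
qed (use D X in \<open>auto simp: ext_def\<close>)

lemma diamond_lin:
  assumes D: "D \<in> carrier_mat 2 2" and lin: "\<And>Y. Y \<in> carrier_mat 1 1 \<Longrightarrow> \<Theta> Y = Y $$ (0,0) \<cdot>\<^sub>m D"
  shows "diamond_norm 1 2 \<Theta> = trace_norm D"
  unfolding diamond_norm_def
proof (rule cSup_eq_maximum)
  have "ext 1 2 1 \<Theta> (1\<^sub>m 1) = kron D (1\<^sub>m 1)" using ext_lin[OF D lin, of "1\<^sub>m 1" 1] by auto
  then have "trace_norm (ext 1 2 1 \<Theta> (1\<^sub>m 1)) = trace_norm D"
    using trace_norm_kron[OF D, of "1\<^sub>m 1" 1 1] trace_norm_one1 by simp
  then show "trace_norm D \<in> {trace_norm (ext 1 2 k \<Theta> X) | k X.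
            k \<ge> 1 \<and> X \<in> carrier_mat (1*k) (1*k) \<and> trace_norm X \<le> 1}"
    using trace_norm_one1 by (intro CollectI exI[of _ 1] exI[of _ "1\<^sub>m 1"]) (simp del: One_nat_def)
next
  fix y assume "y \<in> {trace_norm (ext 1 2 k \<Theta> X) | k X.
            k \<ge> 1 \<and> X \<in> carrier_mat (1*k) (1*k) \<and> trace_norm X \<le> 1}"
  then obtain k X where y: "y = trace_norm (ext 1 2 k \<Theta> X)" and X: "X \<in> carrier_mat k k" "trace_norm X \<le> 1"
    by auto
  have "y = trace_norm D * trace_norm X" using y ext_lin[OF D lin X(1)] trace_norm_kron[OF D X(1)] by simp
  also have "\<dots> \<le> trace_norm D * 1"
    using X trace_norm_nonneg[OF D] by (intro mult_left_mono) auto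
  finally show "y \<le> trace_norm D" by simp
qed

lemma kraus_carrier: "K \<in> set (kraus w g) \<Longrightarrow> K \<in> carrier_mat (2 ^ iwidth w g) (2 ^ w)"
  by (cases g) (auto simp: gate1_def cnot_mat_def anc_mat_def trace_kraus_def meas_kraus_def)

lemma kraus_apply_lin:
  assumes "\<forall>K \<in> set Ks. K \<in> carrier_mat d m" "\<rho> \<in> carrier_mat m m"
  shows "kraus_apply d Ks \<rho> \<in> carrier_mat d d \<and> kraus_apply d Ks (c \<cdot>\<^sub>m \<rho>) = c \<cdot>\<^sub>m kraus_apply d Ks \<rho>"
  using assms(1)
proof (induction Ks)
  case Nil
  then show ?case unfolding kraus_apply_def by (auto intro!: eq_matI)
next
  case (Cons K Ks)
  have K: "K \<in> carrier_mat d m" using Cons.prems by auto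
  have IH: "kraus_apply d Ks \<rho> \<in> carrier_mat d d" "kraus_apply d Ks (c \<cdot>\<^sub>m \<rho>) = c \<cdot>\<^sub>m kraus_apply d Ks \<rho>"
    using Cons by auto
  have unf: "kraus_apply d (K # Ks) X = K * X * adj K + kraus_apply d Ks X" for X
    unfolding kraus_apply_def by simp
  have t: "K * (c \<cdot>\<^sub>m \<rho>) * adj K = c \<cdot>\<^sub>m (K * \<rho> * adj K)"
  proof -
    have "K * (c \<cdot>\<^sub>m \<rho>) = c \<cdot>\<^sub>m (K * \<rho>)" using K assms(2) by (rule mult_smult_distrib)
    moreover have "(c \<cdot>\<^sub>m (K * \<rho>)) * adj K = c \<cdot>\<^sub>m (K * \<rho> * adj K)"
      by (rule mult_smult_assoc_mat[of _ d m]) (use K assms(2) in auto)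
    ultimately show ?thesis by simp
  qed
  show ?case unfolding unf t IH(2)
  proof -
    have "K * \<rho> * adj K \<in> carrier_mat d d" using K assms(2) by auto
    then show "K * \<rho> * adj K + kraus_apply d Ks \<rho> \<in> carrier_mat d d \<and>
      c \<cdot>\<^sub>m (K * \<rho> * adj K) + c \<cdot>\<^sub>m kraus_apply d Ks \<rho> = c \<cdot>\<^sub>m (K * \<rho> * adj K + kraus_apply d Ks \<rho>)"
      using IH(1) add_smult_distrib_left_mat[of "K * \<rho> * adj K" d d "kraus_apply d Ks \<rho>" c] by auto
  qed
qed

lemma apply_instr_lin:
  assumes "\<rho> \<in> carrier_mat (2^w) (2^w)"
  shows "apply_instr w g \<rho> \<in> carrier_mat (2 ^ iwidth w g) (2 ^ iwidth w g) \<and>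
         apply_instr w g (c \<cdot>\<^sub>m \<rho>) = c \<cdot>\<^sub>m apply_instr w g \<rho>"
  unfolding apply_instr_def using kraus_apply_lin[OF _ assms] kraus_carrier by blast

lemma capply_lin:
  assumes "\<rho> \<in> carrier_mat (2^w) (2^w)"
  shows "capply w gs \<rho> \<in> carrier_mat (2 ^ cwidth w gs) (2 ^ cwidth w gs) \<and>
         capply w gs (c \<cdot>\<^sub>m \<rho>) = c \<cdot>\<^sub>m capply w gs \<rho>"
  using assms
proof (induction gs arbitrary: w \<rho>)
  case Nil then show ?case by simp
next
  case (Cons g gs)
  have a: "apply_instr w g \<rho> \<in> carrier_mat (2 ^ iwidth w g) (2 ^ iwidth w g)"
     "apply_instr w g (c \<cdot>\<^sub>m \<rho>) = c \<cdot>\<^sub>m apply_instr w g \<rho>" using apply_instr_lin[OF Cons.prems] by auto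
  show ?case using Cons.IH[OF a(1)] a(2) by simp
qed

section \<open>Pure-state channels\<close>

lemma sum1: "(\<Sum>i<(1::nat). f i) = f 0" by simp

lemma rank1:
  assumes psi: "\<psi> \<in> carrier_mat 2 1" and Y: "Y \<in> carrier_mat 1 1"
  shows "\<psi> * Y * adj \<psi> = Y $$ (0,0) \<cdot>\<^sub>m (\<psi> * adj \<psi>)"
proof (rule eq_matI)
  fix i j assume "i < dim_row (Y $$ (0,0) \<cdot>\<^sub>m (\<psi> * adj \<psi>))" "j < dim_col (Y $$ (0,0) \<cdot>\<^sub>m (\<psi> * adj \<psi>))"
  then have ij: "i < 2" "j < 2" using psi by auto
  have a: "(\<psi> * Y) $$ (i,0) = \<psi> $$ (i,0) * Y $$ (0,0)" using mult_entry[OF psi Y ij(1), of 0] by simp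
  have "(\<psi> * Y * adj \<psi>) $$ (i,j) = (\<psi> * Y) $$ (i,0) * adj \<psi> $$ (0,j)"
    using mult_entry[of "\<psi> * Y" 2 1 "adj \<psi>" 2 i j] psi Y ij by simp
  moreover have "(\<psi> * adj \<psi>) $$ (i,j) = \<psi> $$ (i,0) * adj \<psi> $$ (0,j)"
    using mult_entry[OF psi adj_carrier[OF psi] ij] by simp
  ultimately show "(\<psi> * Y * adj \<psi>) $$ (i,j) = (Y $$ (0,0) \<cdot>\<^sub>m (\<psi> * adj \<psi>)) $$ (i,j)"
    using a ij psi by simp
qed (use psi Y in auto)

lemma mtrace_1: "Y \<in> carrier_mat 1 1 \<Longrightarrow> mtrace Y = Y $$ (0,0)"
  unfolding mtrace_def by simp

lemma psi_norm:
  assumes psi: "\<psi> \<in> carrier_mat 2 1" and u: "adj \<psi> * \<psi> = 1\<^sub>m 1"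
  shows "mtrace (\<psi> * adj \<psi>) = 1"
proof -
  have "(adj \<psi> * \<psi>) $$ (0,0) = 1" using u by simp
  then have "cnj (\<psi> $$ (0,0)) * \<psi> $$ (0,0) + cnj (\<psi> $$ (1,0)) * \<psi> $$ (1,0) = 1"
    using mult_entry[OF adj_carrier[OF psi] psi, of 0 0] psi by (simp add: sum2)
  moreover have "mtrace (\<psi> * adj \<psi>) = \<psi> $$ (0,0) * cnj (\<psi> $$ (0,0)) + \<psi> $$ (1,0) * cnj (\<psi> $$ (1,0))"
    unfolding mtrace_def using psi mult_entry[OF psi adj_carrier[OF psi], of 0 0]
      mult_entry[OF psi adj_carrier[OF psi], of 1 1] by (simp add: sum2)
  ultimately show ?thesis by (simp add: mult.commute)
qed

lemma psd_psi: "\<psi> \<in> carrier_mat 2 1 \<Longrightarrow> psd 2 (\<psi> * adj \<psi>)"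
  using psd_AA[OF adj_carrier, of \<psi> 2 1] by (simp add: adj_adj)

lemma chan_psi:
  assumes psi: "\<psi> \<in> carrier_mat 2 1" and u: "adj \<psi> * \<psi> = 1\<^sub>m 1"
  shows "channel_completion 1 2 \<psi> (\<lambda>\<rho>. \<psi> * \<rho> * adj \<psi>)"
proof -
  have r: "\<And>Y. Y \<in> carrier_mat 1 1 \<Longrightarrow> \<psi> * Y * adj \<psi> = Y $$ (0,0) \<cdot>\<^sub>m (\<psi> * adj \<psi>)"
    using rank1[OF psi] by blast
  have pc: "\<psi> * adj \<psi> \<in> carrier_mat 2 2" using psi by auto
  have ch: "is_channel 1 2 (\<lambda>\<rho>. \<psi> * \<rho> * adj \<psi>)"
    unfolding is_channel_def
  proof (intro conjI ballI allI impI)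
    fix A :: "complex mat" assume A: "A \<in> carrier_mat 1 1"
    show "\<psi> * A * adj \<psi> \<in> carrier_mat 2 2" using psi A by auto
    show "mtrace (\<psi> * A * adj \<psi>) = mtrace A"
      using r[OF A] psi_norm[OF psi u] mtrace_1[OF A] pc
      by (simp add: mtrace_def sum2 sum_distrib_left[symmetric])
    fix c
    have cA: "c \<cdot>\<^sub>m A \<in> carrier_mat 1 1" using A by auto
    show "\<psi> * (c \<cdot>\<^sub>m A) * adj \<psi> = c \<cdot>\<^sub>m (\<psi> * A * adj \<psi>)"
      unfolding r[OF A] r[OF cA]
      by (rule eq_matI) (use A pc in auto)
  next
    fix A B :: "complex mat" assume A: "A \<in> carrier_mat 1 1" and B: "B \<in> carrier_mat 1 1"
    have AB: "A + B \<in> carrier_mat 1 1" using A B by auto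
    show "\<psi> * (A + B) * adj \<psi> = \<psi> * A * adj \<psi> + \<psi> * B * adj \<psi>"
      unfolding r[OF A] r[OF B] r[OF AB]
      by (rule eq_matI) (use A B pc in \<open>auto simp: distrib_right\<close>)
  next
    fix k :: nat and \<rho> assume k: "k \<ge> 1" and p: "psd (1 * k) \<rho>"
    have \<rho>c: "\<rho> \<in> carrier_mat k k" using p psd_def by auto
    have "ext 1 2 k (\<lambda>\<rho>. \<psi> * \<rho> * adj \<psi>) \<rho> = kron (\<psi> * adj \<psi>) \<rho>"
      by (rule ext_lin[OF pc r \<rho>c])
    then show "psd (2 * k) (ext 1 2 k (\<lambda>\<rho>. \<psi> * \<rho> * adj \<psi>) \<rho>)"
      using psd_kron[OF psd_psi[OF psi], of k \<rho>] p by simp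
  qed
  show ?thesis unfolding channel_completion_def
    using ch psi u by (intro conjI exI[of _ \<psi>] exI[of _ "1\<^sub>m 1"]) (auto simp: isometry_def projector_def)
qed

lemma completion_unique:
  assumes psi: "\<psi> \<in> carrier_mat 2 1" and u: "adj \<psi> * \<psi> = 1\<^sub>m 1"
    and cc: "channel_completion 1 2 \<psi> \<Phi>" and \<rho>: "\<rho> \<in> carrier_mat 1 1"
  shows "\<Phi> \<rho> = \<psi> * \<rho> * adj \<psi>"
proof -
  obtain Ut P where UP: "isometry 2 1 Ut" "projector 1 P" "\<psi> = Ut * P"
    "\<forall>\<rho> \<in> carrier_mat 1 1. \<Phi> (P * \<rho> * P) = \<psi> * P * \<rho> * P * adj \<psi>"
    using cc unfolding channel_completion_def by auto
  have Pc: "P \<in> carrier_mat 1 1" "P * P = P" using UP(2) projector_def by auto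
  have Uc: "Ut \<in> carrier_mat 2 1" using UP(1) isometry_def by auto
  have "P $$ (0,0) * P $$ (0,0) = P $$ (0,0)"
    using arg_cong[OF Pc(2), of "\<lambda>X. X $$ (0,0)"] mult_entry[OF Pc(1) Pc(1), of 0 0] by simp
  then have p01: "P $$ (0,0) = 0 \<or> P $$ (0,0) = 1" by (metis mult_cancel_right1 mult_eq_0_iff)
  have P1: "P = 1\<^sub>m 1"
  proof (cases "P $$ (0,0) = 0")
    case True
    then have "P = 0\<^sub>m 1 1" using Pc by (auto intro!: eq_matI)
    then have "\<psi> = 0\<^sub>m 2 1" using UP(3) Uc by simp
    then have "(adj \<psi> * \<psi>) $$ (0,0) = 0" by (simp add: adj_def)
    then show ?thesis using u by simp
  next
    case False
    then show ?thesis using p01 Pc by (auto intro!: eq_matI)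
  qed
  show ?thesis using UP(4) \<rho> psi unfolding P1 by simp
qed

definition e0v :: "complex mat" where "e0v = mat 2 1 (\<lambda>(i,j). if i = 0 then 1 else 0)"
definition phiv :: "real \<Rightarrow> real \<Rightarrow> complex mat" where
  "phiv c s = mat 2 1 (\<lambda>(i,j). if i = 0 then of_real c else of_real s)"

lemma e0v_carrier: "e0v \<in> carrier_mat 2 1" unfolding e0v_def by simp
lemma phiv_carrier: "phiv c s \<in> carrier_mat 2 1" unfolding phiv_def by simp

lemma e0v_dims[simp]: "dim_row e0v = 2" "dim_col e0v = 1" unfolding e0v_def by auto
lemma phiv_dims[simp]: "dim_row (phiv c s) = 2" "dim_col (phiv c s) = 1" unfolding phiv_def by auto

lemma e0v_unit: "adj e0v * e0v = 1\<^sub>m 1"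
proof (rule eq_matI)
  fix i j assume "i < dim_row (1\<^sub>m 1 :: complex mat)" "j < dim_col (1\<^sub>m 1 :: complex mat)"
  then have ij: "i = 0" "j = 0" by auto
  have "(adj e0v * e0v) $$ (0,0) = 1"
    using mult_entry[OF adj_carrier[OF e0v_carrier] e0v_carrier, of 0 0]
    by (simp add: sum2 e0v_def)
  then show "(adj e0v * e0v) $$ (i,j) = 1\<^sub>m 1 $$ (i,j)" using ij by simp
qed (auto simp: e0v_def)

lemma phiv_unit: assumes "c^2 + s^2 = 1" shows "adj (phiv c s) * phiv c s = 1\<^sub>m 1"
proof (rule eq_matI)
  fix i j assume "i < dim_row (1\<^sub>m 1 :: complex mat)" "j < dim_col (1\<^sub>m 1 :: complex mat)"
  then have ij: "i = 0" "j = 0" by auto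
  have "(adj (phiv c s) * phiv c s) $$ (0,0) = of_real (c^2 + s^2)"
    using mult_entry[OF adj_carrier[OF phiv_carrier] phiv_carrier, of 0 0]
    by (simp add: sum2 phiv_def power2_eq_square)
  then show "(adj (phiv c s) * phiv c s) $$ (i,j) = 1\<^sub>m 1 $$ (i,j)" using ij assms by simp
qed (auto simp: phiv_def)

lemma trace_norm_scalar_id:
  assumes D: "D \<in> carrier_mat 2 2" and t: "t \<ge> 0" and DD: "adj D * D = of_real (t * t) \<cdot>\<^sub>m 1\<^sub>m 2"
  shows "trace_norm D = 2 * t"
proof -
  define R where "R = (of_real t :: complex) \<cdot>\<^sub>m 1\<^sub>m 2"
  have Rc: "R \<in> carrier_mat 2 2" unfolding R_def by simp
  have Rp: "psd 2 R" unfolding psd_iff_bf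
  proof (intro conjI allI Rc)
    fix u :: "nat \<Rightarrow> complex"
    have "bf 2 R u u = of_real t * (cnj (u 0) * u 0 + cnj (u 1) * u 1)"
      unfolding bf_def R_def by (simp add: sum2 algebra_simps)
    also have "\<dots> = of_real (t * (cmod (u 0)^2 + cmod (u 1)^2))"
      using complex_norm_square[of "u 0"] complex_norm_square[of "u 1"] by (simp add: mult.commute)
    finally show "Im (bf 2 R u u) = 0" "Re (bf 2 R u u) \<ge> 0" using t by auto
  qed
  have RR: "R * R = adj D * D"
    unfolding DD R_def
    by (rule eq_matI) (auto simp: mult_entry[of _ 2 2 _ 2] sum2)
  have "trace_norm D = Re (mtrace R)" by (rule trace_norm_eq[OF D Rp RR])
  also have "\<dots> = 2 * t" unfolding R_def mtrace_def by (simp add: sum2)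
  finally show ?thesis .
qed

lemma Dphi:
  assumes cs: "c^2 + s^2 = 1"
  shows "e0v * adj e0v - phiv c s * adj (phiv c s) =
    mat 2 2 (\<lambda>(i,j). if i = 0 \<and> j = 0 then of_real (s^2) else if i = 1 \<and> j = 1 then - of_real (s^2) else - of_real (c * s))"
proof (rule eq_matI)
  fix i j assume "i < dim_row (mat 2 2 (\<lambda>(i,j). if i = 0 \<and> j = 0 then of_real (s^2) else if i = 1 \<and> j = 1 then - of_real (s^2) else - (of_real (c * s) :: complex)))"
     "j < dim_col (mat 2 2 (\<lambda>(i,j). if i = 0 \<and> j = 0 then of_real (s^2) else if i = 1 \<and> j = 1 then - of_real (s^2) else - (of_real (c * s) :: complex)))"
  then have ij: "i < 2" "j < 2" by auto
  have c2: "1 - c^2 = s^2" using cs by simp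
  have c2': "(1::complex) - of_real c * of_real c = of_real (s^2)" using c2
    by (metis of_real_1 of_real_diff of_real_mult power2_eq_square)
  have "(e0v * adj e0v) $$ (i,j) = (if i = 0 \<and> j = 0 then 1 else 0)"
    using mult_entry[OF e0v_carrier adj_carrier[OF e0v_carrier] ij] ij by (simp add: e0v_def)
  moreover have "(phiv c s * adj (phiv c s)) $$ (i,j) = (if i = 0 then of_real c else of_real s) * (if j = 0 then of_real c else of_real s)"
    using mult_entry[OF phiv_carrier adj_carrier[OF phiv_carrier] ij] ij by (simp add: phiv_def)
  ultimately show "(e0v * adj e0v - phiv c s * adj (phiv c s)) $$ (i,j) = mat 2 2 (\<lambda>(i,j). if i = 0 \<and> j = 0 then of_real (s^2) else if i = 1 \<and> j = 1 then - of_real (s^2) else - (of_real (c * s) :: complex)) $$ (i,j)"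
  proof -
    have "i = 0 \<or> i = 1" "j = 0 \<or> j = 1" using ij by auto
    then show ?thesis using phiv_carrier c2' \<open>(e0v * adj e0v) $$ (i,j) = _\<close> \<open>(phiv c s * adj (phiv c s)) $$ (i,j) = _\<close>
      by (elim disjE) (simp_all add: power2_eq_square)
  qed
qed (auto simp: phiv_def)

lemma trace_norm_Dphi:
  assumes cs: "c^2 + s^2 = 1" and s: "s \<ge> 0"
  shows "trace_norm (e0v * adj e0v - phiv c s * adj (phiv c s)) = 2 * s"
proof -
  define D :: "complex mat" where "D = mat 2 2 (\<lambda>(i,j). if i = 0 \<and> j = 0 then of_real (s^2) else if i = 1 \<and> j = 1 then - of_real (s^2) else - of_real (c * s))"
  have Dc: "D \<in> carrier_mat 2 2" unfolding D_def by simp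
  have k: "of_real (s^2) * of_real (s^2) + of_real (c * s) * of_real (c * s) = (of_real (s * s) :: complex)"
  proof -
    have "s^2 * s^2 + (c * s) * (c * s) = s * s" 
    proof -
      have "s^2 * s^2 + (c * s) * (c * s) = s^2 * (c^2 + s^2)" by (simp add: power2_eq_square algebra_simps)
      then show ?thesis using cs by (simp add: power2_eq_square)
    qed
    then show ?thesis by (simp only: of_real_add[symmetric] of_real_mult[symmetric])
  qed
  have "adj D * D = of_real (s * s) \<cdot>\<^sub>m 1\<^sub>m 2"
  proof (rule eq_matI)
    fix i j assume "i < dim_row (of_real (s * s) \<cdot>\<^sub>m 1\<^sub>m 2 :: complex mat)" "j < dim_col (of_real (s * s) \<cdot>\<^sub>m 1\<^sub>m 2 :: complex mat)"
    then have ij: "i < 2" "j < 2" by auto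
    show "(adj D * D) $$ (i,j) = (of_real (s * s) \<cdot>\<^sub>m 1\<^sub>m 2) $$ (i,j)"
    proof -
      have "i = 0 \<or> i = 1" "j = 0 \<or> j = 1" using ij by auto
      then show ?thesis using mult_entry[OF adj_carrier[OF Dc] Dc ij] k
        by (elim disjE) (simp_all add: D_def sum2 algebra_simps)
    qed
  qed (auto simp: D_def)
  then show ?thesis using trace_norm_scalar_id[OF Dc s] Dphi[OF cs] unfolding D_def by simp
qed

section \<open>A constant-output Turing machine\<close>

definition LL :: "bool list" where "LL = enc_circ (0, [Anc])"

lemma LL_eq: "LL = [False, False, True, True, True, True, True, True, False, False]"
  unfolding LL_def enc_circ_def by (simp add: numeral_eq_Suc enc_nat_def)

definition symL :: "nat \<Rightarrow> nat" where "symL i = (if LL ! i then 2 else 1)"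

definition delta0 :: "nat \<Rightarrow> nat \<Rightarrow> nat \<times> nat \<times> dir" where
  "delta0 q a = (if q = 0 then (2, symL 0, Rgt) else if 2 \<le> q \<and> q \<le> 10 then (q + 1, symL (q - 1), Rgt)
     else if q = 11 then (1, 3, Stay) else (1, 0, Stay))"

definition M0 :: tm where "M0 = (12, 4, delta0)"

lemma symL_lt: "symL i < 4" unfolding symL_def by auto

lemma wf_M0: "wf_tm M0"
  unfolding wf_tm_def M0_def delta0_def using symL_lt by auto

lemma M0_run:
  assumes "t \<le> 10"
  shows "(tm_step M0 ^^ t) (tm_init x) = (if t = 0 then 0 else t + 1, t,
     \<lambda>j. if j < t then symL j else snd (snd (tm_init x)) j)"
  using assms
proof (induction t)
  case 0 then show ?case by (auto simp: tm_init_def)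
next
  case (Suc t)
  then have IH: "(tm_step M0 ^^ t) (tm_init x) = (if t = 0 then 0 else t + 1, t,
     \<lambda>j. if j < t then symL j else snd (snd (tm_init x)) j)" by simp
  have "(tm_step M0 ^^ Suc t) (tm_init x) = tm_step M0 ((tm_step M0 ^^ t) (tm_init x))" by simp
  also have "\<dots> = (Suc t + 1, Suc t, \<lambda>j. if j < Suc t then symL j else snd (snd (tm_init x)) j)"
    unfolding IH using Suc.prems by (simp add: tm_step_def M0_def delta0_def) (auto intro!: ext)
  finally show ?case by simp
qed

lemma M0_halt:
  "(tm_step M0 ^^ 11) (tm_init x) = (1, 10, \<lambda>j. if j < 10 then symL j else if j = 10 then 3 else snd (snd (tm_init x)) j)"
proof -
  have "(tm_step M0 ^^ 11) (tm_init x) = tm_step M0 ((tm_step M0 ^^ 10) (tm_init x))"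
    by (simp add: numeral_eq_Suc)
  also have "\<dots> = (1, 10, \<lambda>j. if j < 10 then symL j else if j = 10 then 3 else snd (snd (tm_init x)) j)"
    unfolding M0_run[of 10 x, simplified] by (simp add: tm_step_def M0_def delta0_def) (auto intro!: ext)
  finally show ?thesis .
qed

lemma M0_output:
  "tm_output (\<lambda>j. if j < 10 then symL j else if j = 10 then 3 else snd (snd (tm_init x)) j) = LL"
proof -
  let ?tp = "\<lambda>j. if j < 10 then symL j else if j = 10 then (3::nat) else snd (snd (tm_init x)) j"
  have "(LEAST j. ?tp j \<noteq> 1 \<and> ?tp j \<noteq> 2) = 10"
  proof (rule Least_equality)
    show "?tp 10 \<noteq> 1 \<and> ?tp 10 \<noteq> 2" by simp
    fix y assume y: "?tp y \<noteq> 1 \<and> ?tp y \<noteq> 2"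
    show "10 \<le> y"
    proof (rule ccontr)
      assume "\<not> 10 \<le> y" then have "y < 10" by simp
      then show False using y by (simp add: symL_def split: if_splits)
    qed
  qed
  then show ?thesis unfolding tm_output_def
    by (simp add: upt_rec symL_def LL_eq numeral_eq_Suc)
qed

lemma const_ptc: "poly_time_computable (\<lambda>_. LL)"
  unfolding poly_time_computable_def
proof (intro exI conjI)
  show "wf_tm M0" by (rule wf_M0)
  show "computes_in_time M0 (\<lambda>_. LL) (\<lambda>n. 11 * n ^ 0 + 11)"
    unfolding computes_in_time_def
    using M0_halt M0_output by (intro allI exI[of _ 11]) simp
qed

section \<open>Encoding injectivity\<close>

lemma enc_nat_0: "enc_nat 0 = [False, False]" unfolding enc_nat_def by simp
lemma enc_nat_Suc: "enc_nat (Suc a) = True # True # enc_nat a" unfolding enc_nat_def by simp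

lemma enc_nat_prefix: "enc_nat a @ r = enc_nat b @ r' \<Longrightarrow> a = b \<and> r = r'"
proof (induction a arbitrary: b)
  case 0 then show ?case by (cases b) (auto simp: enc_nat_0 enc_nat_Suc)
next
  case (Suc a) then show ?case by (cases b) (auto simp: enc_nat_0 enc_nat_Suc)
qed

fun itag :: "instr \<Rightarrow> nat" where
  "itag (Hg i) = 0" | "itag (Tg i) = 1" | "itag (CNOTg c t) = 2" | "itag Anc = 3" | "itag (TraceOut i) = 4" | "itag (Meas i) = 5"

fun iargs :: "instr \<Rightarrow> bool list" where
  "iargs (Hg i) = enc_nat i" | "iargs (Tg i) = enc_nat i" | "iargs (CNOTg c t) = enc_nat c @ enc_nat t"
| "iargs Anc = []" | "iargs (TraceOut i) = enc_nat i" | "iargs (Meas i) = enc_nat i"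

lemma enc_instr_split: "enc_instr g = enc_nat (itag g) @ iargs g"
  by (cases g) auto

lemma enc_instr_prefix:
  assumes "enc_instr g @ r = enc_instr h @ r'"
  shows "g = h \<and> r = r'"
proof -
  have "enc_nat (itag g) @ (iargs g @ r) = enc_nat (itag h) @ (iargs h @ r')"
    using assms unfolding enc_instr_split by simp
  then have t: "itag g = itag h" and a: "iargs g @ r = iargs h @ r'" using enc_nat_prefix by blast+
  show ?thesis
  proof (cases g)
    case (CNOTg c t)
    then obtain c' t' where h: "h = CNOTg c' t'" using t by (cases h) auto
    have "enc_nat c @ (enc_nat t @ r) = enc_nat c' @ (enc_nat t' @ r')" using a CNOTg h by simp
    then have "c = c'" "enc_nat t @ r = enc_nat t' @ r'" using enc_nat_prefix by blast+
    then show ?thesis using enc_nat_prefix CNOTg h by blast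
  qed (use t a in \<open>(cases h; auto dest: enc_nat_prefix)+\<close>)
qed

lemma enc_instr_nonempty: "enc_instr g \<noteq> []"
  by (cases g) (auto simp: enc_nat_def)

lemma concat_enc_inj: "concat (map enc_instr gs) = concat (map enc_instr hs) \<Longrightarrow> gs = hs"
proof (induction gs arbitrary: hs)
  case Nil then show ?case by (cases hs) (auto simp: enc_instr_nonempty)
next
  case (Cons g gs)
  then show ?case
  proof (cases hs)
    case Nil then show ?thesis using Cons.prems enc_instr_nonempty by auto
  next
    case (Cons h hs')
    then have "enc_instr g @ concat (map enc_instr gs) = enc_instr h @ concat (map enc_instr hs')"
      using Cons.prems \<open>hs = h # hs'\<close> by simp
    then show ?thesis using enc_instr_prefix Cons.IH Cons by blast
  qed
qed

lemma enc_circ_inj: "inj enc_circ"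
proof (rule injI)
  fix a b assume "enc_circ a = enc_circ b"
  then have "enc_nat (fst a) @ concat (map enc_instr (snd a)) = enc_nat (fst b) @ concat (map enc_instr (snd b))"
    unfolding enc_circ_def .
  then show "a = b" using enc_nat_prefix concat_enc_inj by (metis prod.expand)
qed

section \<open>Countably many polynomial-time computable functions\<close>

instance dir :: countable by countable_datatype

definition tcode :: "tm \<Rightarrow> nat \<times> nat \<times> (nat \<times> nat \<times> dir) list list" where
  "tcode M = (case M of (Q, G, \<delta>) \<Rightarrow> (Q, G, map (\<lambda>q. map (\<delta> q) [0..<G]) [0..<Q]))"

definition tinv :: "tm \<Rightarrow> config \<Rightarrow> bool" where
  "tinv M c = (case M of (Q, G, \<delta>) \<Rightarrow> fst c < Q \<and> (\<forall>i. snd (snd c) i < G))"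

lemma tinv_init: "wf_tm M \<Longrightarrow> tinv M (tm_init x)"
  unfolding wf_tm_def tinv_def tm_init_def by (cases M) auto

lemma tinv_step:
  assumes wf: "wf_tm M" and inv: "tinv M c" shows "tinv M (tm_step M c)"
proof -
  obtain Q G \<delta> where M: "M = (Q, G, \<delta>)" by (cases M) auto
  obtain q h tp where c: "c = (q, h, tp)" by (cases c) auto
  have q: "q < Q" "\<forall>i. tp i < G" using inv unfolding tinv_def M c by auto
  obtain q' a' d where dl: "\<delta> q (tp h) = (q', a', d)" by (cases "\<delta> q (tp h)") auto
  have "fst (\<delta> q (tp h)) < Q \<and> fst (snd (\<delta> q (tp h))) < G"
    using wf q unfolding wf_tm_def M by auto
  then have "q' < Q" "a' < G" using dl by auto
  then show ?thesis using q unfolding tinv_def tm_step_def M c by (auto simp: dl)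
qed

lemma step_code_eq:
  assumes "tcode M = tcode M'" "tinv M c"
  shows "tm_step M c = tm_step M' c"
proof -
  obtain Q G \<delta> where M: "M = (Q, G, \<delta>)" by (cases M) auto
  obtain Q' G' \<delta>' where M': "M' = (Q', G', \<delta>')" by (cases M') auto
  obtain q h tp where c: "c = (q, h, tp)" by (cases c) auto
  have QG: "Q' = Q" "G' = G" and tab: "map (\<lambda>q. map (\<delta> q) [0..<G]) [0..<Q] = map (\<lambda>q. map (\<delta>' q) [0..<G]) [0..<Q]"
    using assms(1) unfolding M M' tcode_def by auto
  have q: "q < Q" "tp h < G" using assms(2) unfolding tinv_def M c by auto
  have "\<delta> q (tp h) = \<delta>' q (tp h)"
    using arg_cong[OF tab, of "\<lambda>l. l ! q ! tp h"] q by simp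
  then show ?thesis unfolding M M' c tm_step_def QG by simp
qed

lemma runs_eq:
  assumes "wf_tm M" "tcode M = tcode M'"
  shows "(tm_step M ^^ t) (tm_init x) = (tm_step M' ^^ t) (tm_init x) \<and> tinv M ((tm_step M ^^ t) (tm_init x))"
proof (induction t)
  case 0 then show ?case using tinv_init[OF assms(1)] by simp
next
  case (Suc t)
  define c where "c = (tm_step M ^^ t) (tm_init x)"
  have c: "c = (tm_step M' ^^ t) (tm_init x)" "tinv M c" using Suc c_def by auto
  have "(tm_step M ^^ Suc t) (tm_init x) = tm_step M c" unfolding c_def by simp
  moreover have "(tm_step M' ^^ Suc t) (tm_init x) = tm_step M' c" using c(1) by simp
  ultimately show ?case using step_code_eq[OF assms(2) c(2)] tinv_step[OF assms(1) c(2)] by simp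
qed

lemma step_halt: "fst c = 1 \<Longrightarrow> tm_step M c = c"
  unfolding tm_step_def by (cases M; cases c) auto

lemma halt_stable:
  assumes "fst ((tm_step M ^^ t) c) = 1"
  shows "(tm_step M ^^ (t + j)) c = (tm_step M ^^ t) c"
proof (induction j)
  case 0 then show ?case by simp
next
  case (Suc j)
  have "(tm_step M ^^ (t + Suc j)) c = tm_step M ((tm_step M ^^ (t + j)) c)" by simp
  also have "\<dots> = tm_step M ((tm_step M ^^ t) c)" using Suc by simp
  also have "\<dots> = (tm_step M ^^ t) c" using step_halt[OF assms] .
  finally show ?case .
qed

lemma same_code_same_fun:
  assumes "wf_tm M" "wf_tm M'" "tcode M = tcode M'" "computes_in_time M f T" "computes_in_time M' g T'"
  shows "f = g"
proof
  fix x
  obtain t where t: "fst ((tm_step M ^^ t) (tm_init x)) = 1" "tm_output (snd (snd ((tm_step M ^^ t) (tm_init x)))) = f x"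
    using assms(4) unfolding computes_in_time_def by blast
  obtain t' where t': "fst ((tm_step M' ^^ t') (tm_init x)) = 1" "tm_output (snd (snd ((tm_step M' ^^ t') (tm_init x)))) = g x"
    using assms(5) unfolding computes_in_time_def by blast
  have "(tm_step M ^^ (t + t')) (tm_init x) = (tm_step M ^^ t) (tm_init x)" using halt_stable[OF t(1)] .
  moreover have "(tm_step M' ^^ (t' + t)) (tm_init x) = (tm_step M' ^^ t') (tm_init x)" using halt_stable[OF t'(1)] .
  moreover have "(tm_step M ^^ (t + t')) (tm_init x) = (tm_step M' ^^ (t + t')) (tm_init x)"
    using runs_eq[OF assms(1,3)] by blast
  ultimately show "f x = g x" using t t' by (simp add: add.commute)
qed

lemma countable_ptc: "countable {f. poly_time_computable f}"
proof (rule countable_image_inj_on)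
  define cd where "cd f = (SOME p. \<exists>M c k. wf_tm M \<and> computes_in_time M f (\<lambda>n. c * n ^ k + c) \<and> tcode M = p)" for f
  have cdp: "\<exists>M c k. wf_tm M \<and> computes_in_time M f (\<lambda>n. c * n ^ k + c) \<and> tcode M = cd f"
    if "poly_time_computable f" for f
  proof -
    have "\<exists>p M c k. wf_tm M \<and> computes_in_time M f (\<lambda>n. c * n ^ k + c) \<and> tcode M = p"
      using that unfolding poly_time_computable_def by blast
    then show ?thesis unfolding cd_def by (rule someI_ex)
  qed
  show "inj_on cd {f. poly_time_computable f}"
  proof (rule inj_onI)
    fix f g assume f: "f \<in> {f. poly_time_computable f}" and g: "g \<in> {f. poly_time_computable f}" and e: "cd f = cd g"
    obtain M c k where M: "wf_tm M" "computes_in_time M f (\<lambda>n. c * n ^ k + c)" "tcode M = cd f" using cdp f by blast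
    obtain M' c' k' where M': "wf_tm M'" "computes_in_time M' g (\<lambda>n. c' * n ^ k' + c')" "tcode M' = cd g" using cdp g by blast
    show "f = g" using same_code_same_fun[OF M(1) M'(1) _ M(2) M'(2)] M(3) M'(3) e by simp
  qed
  show "countable (cd ` {f. poly_time_computable f})" by simp
qed

lemma not_countable_sets: "\<not> countable (UNIV :: bool list set set)"
proof
  assume c: "countable (UNIV :: bool list set set)"
  then obtain f :: "nat \<Rightarrow> bool list set" where f: "range f = UNIV"
    using uncountable_def[of "UNIV :: bool list set set"] by auto
  define h where "h l = f (length l)" for l :: "bool list"
  have "h ` UNIV = Pow UNIV"
  proof -
    have "range h = range f" unfolding h_def
      by (auto intro!: image_eqI[of _ _ "replicate _ True"] simp: image_iff)
    then show ?thesis using f by simp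
  qed
  then show False using Cantors_theorem[of "UNIV :: bool list set"] by blast
qed

lemma scalar_one1: "(Y :: complex mat) \<in> carrier_mat 1 1 \<Longrightarrow> Y = Y $$ (0,0) \<cdot>\<^sub>m 1\<^sub>m 1"
  by (rule eq_matI) auto

lemma lin_diff:
  assumes R: "R \<in> carrier_mat 2 2" and psi: "\<psi> \<in> carrier_mat 2 1" and Y: "Y \<in> carrier_mat 1 1"
  shows "Y $$ (0,0) \<cdot>\<^sub>m R - \<psi> * Y * adj \<psi> = Y $$ (0,0) \<cdot>\<^sub>m (R - \<psi> * adj \<psi>)"
  unfolding rank1[OF psi Y] by (rule eq_matI) (use R psi in \<open>auto simp: algebra_simps\<close>)

lemma circ_bound:
  assumes psi: "\<psi> \<in> carrier_mat 2 1" and u: "adj \<psi> * \<psi> = 1\<^sub>m 1"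
    and w: "cwidth 0 gs = 1"
    and cc: "channel_completion 1 2 \<psi> \<Phi>"
    and dn: "diamond_norm 1 2 (\<lambda>\<rho>. capply 0 gs \<rho> - \<Phi> \<rho>) \<le> a"
  shows "cmod ((capply 0 gs (1\<^sub>m 1)) $$ (0,0) - (\<psi> * adj \<psi>) $$ (0,0)) \<le> a"
proof -
  define R where "R = capply 0 gs (1\<^sub>m 1)"
  have Rc: "R \<in> carrier_mat 2 2" using capply_lin[of "1\<^sub>m 1" 0 gs] w unfolding R_def by auto
  define D where "D = R - \<psi> * adj \<psi>"
  have Dc: "D \<in> carrier_mat 2 2" unfolding D_def using psi by auto
  have lin: "(\<lambda>\<rho>. capply 0 gs \<rho> - \<Phi> \<rho>) Y = Y $$ (0,0) \<cdot>\<^sub>m D" if Y: "Y \<in> carrier_mat 1 1" for Y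
  proof -
    have "capply 0 gs Y = Y $$ (0,0) \<cdot>\<^sub>m R"
      using capply_lin[of "1\<^sub>m 1" 0 gs "Y $$ (0,0)"] scalar_one1[OF Y] unfolding R_def by auto
    moreover have "\<Phi> Y = \<psi> * Y * adj \<psi>" by (rule completion_unique[OF psi u cc Y])
    ultimately show ?thesis using lin_diff[OF Rc psi Y] unfolding D_def by simp
  qed
  have "diamond_norm 1 2 (\<lambda>\<rho>. capply 0 gs \<rho> - \<Phi> \<rho>) = trace_norm D"
    by (rule diamond_lin[OF Dc lin])
  then have "trace_norm D \<le> a" using dn by simp
  moreover have "cmod (D $$ (0,0)) \<le> trace_norm D" by (rule trace_norm_ge_entry[OF Dc])
  moreover have "D $$ (0,0) = R $$ (0,0) - (\<psi> * adj \<psi>) $$ (0,0)" unfolding D_def using psi by simp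
  ultimately show ?thesis unfolding R_def by simp
qed

lemma anc_e0: "anc_mat 0 = e0v"
  by (rule eq_matI) (auto simp: anc_mat_def e0v_def)

lemma capply_anc:
  assumes Y: "Y \<in> carrier_mat 1 1"
  shows "capply 0 [Anc] Y = Y $$ (0,0) \<cdot>\<^sub>m (e0v * adj e0v)"
proof -
  have "capply 0 [Anc] Y = e0v * Y * adj e0v + 0\<^sub>m 2 2"
    by (simp add: apply_instr_def kraus_apply_def anc_e0)
  also have "\<dots> = e0v * Y * adj e0v"
    by (rule right_add_zero_mat) (use e0v_carrier Y in auto)
  finally show ?thesis using rank1[OF e0v_carrier Y] by simp
qed

definition s0 :: "real \<Rightarrow> real" where "s0 b = b / 2"
definition c0 :: "real \<Rightarrow> real" where "c0 b = sqrt (1 - (b/2)^2)"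

definition psiS :: "real \<Rightarrow> bool list set \<Rightarrow> bool list \<Rightarrow> complex mat" where
  "psiS b S x = (if x \<in> S then phiv (c0 b) (s0 b) else e0v)"

definition PS :: "real \<Rightarrow> bool list set \<Rightarrow> usp" where
  "PS b S = (\<lambda>x. (0, 1, psiS b S x))"

lemma cs_unit: assumes "0 \<le> b" "b < 1" shows "(c0 b)^2 + (s0 b)^2 = 1"
proof -
  have "(b/2)^2 \<le> 1" using assms by (simp add: power_le_one)
  then show ?thesis unfolding c0_def s0_def by simp
qed

lemma psiS_props:
  assumes "0 \<le> b" "b < 1"
  shows "psiS b S x \<in> carrier_mat 2 1" "adj (psiS b S x) * psiS b S x = 1\<^sub>m 1"
  unfolding psiS_def using phiv_carrier e0v_carrier phiv_unit[OF cs_unit[OF assms]] e0v_unit by auto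

lemma PS_in_beta:
  assumes b: "0 < b" "b < 1"
  shows "PS b S \<in> unitaryBQP (\<lambda>_. b)"
  unfolding unitaryBQP_def
proof (intro CollectI conjI exI[of _ "\<lambda>_. (0, [Anc])"])
  show "is_usp (PS b S)" unfolding is_usp_def PS_def partial_isometry_def
  proof (intro allI)
    fix x
    show "case (0::nat, 1::nat, psiS b S x) of (n, m, U) \<Rightarrow> \<exists>Ut P. isometry (2 ^ m) (2 ^ n) Ut \<and> projector (2 ^ n) P \<and> U = Ut * P"
      unfolding case_prod_conv
      by (rule exI[of _ "psiS b S x"], rule exI[of _ "1\<^sub>m 1"])
        (use psiS_props[of b S x] b in \<open>auto simp: isometry_def projector_def\<close>)
  qed
  have "enc_circ \<circ> (\<lambda>_::bool list. (0::nat, [Anc])) = (\<lambda>_. LL)" unfolding LL_def by auto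
  then show "poly_time_computable (enc_circ \<circ> (\<lambda>_. (0, [Anc])))" using const_ptc by simp
  show "implements_with_error (\<lambda>_. (0, [Anc])) (PS b S) (\<lambda>_. b)"
    unfolding implements_with_error_def
  proof (intro allI)
    fix x
    let ?\<psi> = "psiS b S x"
    have pc: "?\<psi> \<in> carrier_mat 2 1" and pu: "adj ?\<psi> * ?\<psi> = 1\<^sub>m 1" using psiS_props b by auto
    define D where "D = e0v * adj e0v - ?\<psi> * adj ?\<psi>"
    have Dc: "D \<in> carrier_mat 2 2" unfolding D_def using pc by auto
    have lin: "(\<lambda>\<rho>. capply 0 [Anc] \<rho> - ?\<psi> * \<rho> * adj ?\<psi>) Y = Y $$ (0,0) \<cdot>\<^sub>m D" if Y: "Y \<in> carrier_mat 1 1" for Y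
      using capply_anc[OF Y] lin_diff[of "e0v * adj e0v" ?\<psi> Y] pc Y e0v_carrier unfolding D_def by auto
    have "trace_norm D \<le> b"
    proof (cases "x \<in> S")
      case True
      then have "D = e0v * adj e0v - phiv (c0 b) (s0 b) * adj (phiv (c0 b) (s0 b))" unfolding D_def psiS_def by simp
      then have "trace_norm D = 2 * s0 b" using trace_norm_Dphi[OF cs_unit] b unfolding s0_def by simp
      then show ?thesis unfolding s0_def by simp
    next
      case False
      then have "D = 0\<^sub>m 2 2" unfolding D_def psiS_def using e0v_carrier by simp
      then have "adj D * D = of_real (0 * 0) \<cdot>\<^sub>m 1\<^sub>m 2" by (auto intro!: eq_matI simp: adj_def)
      then have "trace_norm D = 2 * 0" using trace_norm_scalar_id[OF Dc, of 0] by simp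
      then show ?thesis using b by simp
    qed
    then have "diamond_norm 1 2 (\<lambda>\<rho>. capply 0 [Anc] \<rho> - ?\<psi> * \<rho> * adj ?\<psi>) \<le> b"
      using diamond_lin[OF Dc lin] by simp
    then show "case PS b S x of (n, m, U) \<Rightarrow>
       fst (0, [Anc]) = n \<and> cvalid n (snd (0::nat, [Anc])) \<and> cwidth n (snd (0::nat, [Anc])) = m \<and>
       (\<exists>\<Phi>. channel_completion (2 ^ n) (2 ^ m) U \<Phi> \<and>
        diamond_norm (2 ^ n) (2 ^ m) (\<lambda>\<rho>. capply n (snd (0::nat, [Anc])) \<rho> - \<Phi> \<rho>) \<le> b)"
      unfolding PS_def using chan_psi[OF pc pu] by auto
  qed
qed

lemma phiv_00: "(phiv c s * adj (phiv c s)) $$ (0,0) = of_real (c * c)"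
  using mult_entry[OF phiv_carrier adj_carrier[OF phiv_carrier], of 0 0 c s c s] by (simp add: phiv_def)

lemma e0v_00: "(e0v * adj e0v) $$ (0,0) = 1"
  using mult_entry[OF e0v_carrier adj_carrier[OF e0v_carrier], of 0 0] by (simp add: e0v_def)

lemma impl_at:
  assumes "implements_with_error C (PS b S) (\<lambda>_. a)"
  shows "cwidth 0 (snd (C x)) = 1 \<and> (\<exists>\<Phi>. channel_completion 1 2 (psiS b S x) \<Phi> \<and>
          diamond_norm 1 2 (\<lambda>\<rho>. capply 0 (snd (C x)) \<rho> - \<Phi> \<rho>) \<le> a)"
  using assms unfolding implements_with_error_def PS_def by (auto dest!: spec[of _ x])

lemma no_two:
  assumes a: "0 < a" and b: "0 < b" "b < 1" and ab: "b > 2 * sqrt (3 * a)"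
    and S: "implements_with_error C (PS b S) (\<lambda>_. a)" and T: "implements_with_error C (PS b T) (\<lambda>_. a)"
    and x: "x \<in> S" "x \<notin> T"
  shows False
proof -
  obtain \<Phi>1 where w: "cwidth 0 (snd (C x)) = 1" and c1: "channel_completion 1 2 (phiv (c0 b) (s0 b)) \<Phi>1"
      and d1: "diamond_norm 1 2 (\<lambda>\<rho>. capply 0 (snd (C x)) \<rho> - \<Phi>1 \<rho>) \<le> a"
    using impl_at[OF S, of x] x unfolding psiS_def by auto
  obtain \<Phi>2 where c2: "channel_completion 1 2 e0v \<Phi>2"
      and d2: "diamond_norm 1 2 (\<lambda>\<rho>. capply 0 (snd (C x)) \<rho> - \<Phi>2 \<rho>) \<le> a"
    using impl_at[OF T, of x] x unfolding psiS_def by auto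
  define r where "r = capply 0 (snd (C x)) (1\<^sub>m 1) $$ (0,0)"
  have cs: "(c0 b)^2 + (s0 b)^2 = 1" using cs_unit b by simp
  have i1: "cmod (r - of_real (c0 b * c0 b)) \<le> a"
    using circ_bound[OF phiv_carrier phiv_unit[OF cs] w c1 d1] phiv_00 unfolding r_def by simp
  have i2: "cmod (r - 1) \<le> a"
    using circ_bound[OF e0v_carrier e0v_unit w c2 d2] e0v_00 unfolding r_def by simp
  have "cmod ((r - 1) - (r - of_real (c0 b * c0 b))) \<le> cmod (r - 1) + cmod (r - of_real (c0 b * c0 b))"
    by (rule norm_triangle_ineq4)
  moreover have "(r - 1) - (r - of_real (c0 b * c0 b)) = - of_real ((s0 b)^2)"
  proof -
    have cc: "c0 b * c0 b = 1 - (s0 b)^2" using cs by (simp add: power2_eq_square)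
    have "(r - 1) - (r - of_real (c0 b * c0 b)) = of_real (c0 b * c0 b) - 1" by simp
    also have "\<dots> = - of_real ((s0 b)^2)" unfolding cc by simp
    finally show ?thesis .
  qed
  moreover have "cmod (- (of_real ((s0 b)^2) :: complex)) = (s0 b)^2"
    by (simp only: norm_minus_cancel norm_of_real) simp
  ultimately have "(s0 b)^2 \<le> 2 * a" using i1 i2 by simp
  moreover have "(s0 b)^2 > 3 * a"
  proof -
    have "sqrt (3 * a) < b / 2" using ab by simp
    then have "(sqrt (3 * a))^2 < (b/2)^2" using a by (intro power_strict_mono) auto
    then show ?thesis unfolding s0_def using a by simp
  qed
  ultimately show False using a by simp
qed

theorem mainTheorem6:
  fixes \<alpha> \<beta> :: real
  assumes "0 < \<alpha>" and "\<alpha> < \<beta>" and "\<beta> < 1" and "\<beta> > 2 * sqrt (3 * \<alpha>)"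
  shows "unitaryBQP (\<lambda>_. \<alpha>) \<noteq> unitaryBQP (\<lambda>_. \<beta>)"
proof
  assume eq: "unitaryBQP (\<lambda>_. \<alpha>) = unitaryBQP (\<lambda>_. \<beta>)"
  have b: "0 < \<beta>" "\<beta> < 1" using assms by auto
  have mem: "PS \<beta> S \<in> unitaryBQP (\<lambda>_. \<alpha>)" for S using PS_in_beta[OF b] eq by simp
  define Cf where "Cf S = (SOME C. poly_time_computable (enc_circ \<circ> C) \<and> implements_with_error C (PS \<beta> S) (\<lambda>_. \<alpha>))" for S
  have CfP: "poly_time_computable (enc_circ \<circ> Cf S) \<and> implements_with_error (Cf S) (PS \<beta> S) (\<lambda>_. \<alpha>)" for S
  proof -
    have "\<exists>C. poly_time_computable (enc_circ \<circ> C) \<and> implements_with_error C (PS \<beta> S) (\<lambda>_. \<alpha>)"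
      using mem[of S] unfolding unitaryBQP_def by auto
    then show ?thesis unfolding Cf_def by (rule someI_ex)
  qed
  define g where "g S = enc_circ \<circ> Cf S" for S
  have inj: "inj g"
  proof (rule injI)
    fix S T assume "g S = g T"
    then have "Cf S = Cf T" unfolding g_def using enc_circ_inj
      by (intro ext) (metis comp_apply injD)
    then have I: "implements_with_error (Cf S) (PS \<beta> S) (\<lambda>_. \<alpha>)" "implements_with_error (Cf S) (PS \<beta> T) (\<lambda>_. \<alpha>)"
      using CfP[of S] CfP[of T] by auto
    show "S = T"
    proof (rule ccontr)
      assume "S \<noteq> T"
      then obtain x where "(x \<in> S \<and> x \<notin> T) \<or> (x \<in> T \<and> x \<notin> S)" by blast
      then show False
        using no_two[OF assms(1) b assms(4) I(1) I(2)] no_two[OF assms(1) b assms(4) I(2) I(1)] by blast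
    qed
  qed
  have "g ` UNIV \<subseteq> {f. poly_time_computable f}" using CfP unfolding g_def by auto
  then have "countable (g ` UNIV)" using countable_ptc countable_subset by blast
  then have "countable (UNIV :: bool list set set)" using countable_image_inj_on inj by blast
  then show False using not_countable_sets by blast
qed


end
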